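(* Let $H$ be a strictly balanced graph, $c>0$, $h_0>0$, with $\mu:=c^{v(H)}/|\mathrm{Aut}(H)|\ge h_0$. Let $m_n\to\infty$ and, for each $n$, let $\mathcal{G}_{n,1},\dots,\mathcal{G}_{n,n}$ be i.i.d. $G\big(m_n,(c/m_n)^{1/k(H)}\big)$ graphs, with $h_{n,i}=\mathcal{T}(H,\mathcal{G}_{n,i})-h_0$. Let $\hat\lambda_n$ be the unique real root of $\sum_{i=1}^n h_{n,i}e^{-\lambda h_{n,i}}=0$ (defined on an event of probability tending to one). Then $\hat\lambda_n\xrightarrow{P}\lambda^{\circ}:=\log(\mu/h_0)$.
   Context: $v(H),e(H)$ are the numbers of vertices and edges of $H$; $k(H)=\max\{e(F)/v(F): F\subseteq H,\ e(F)\ge1\}$; $H$ is strictly balanced if $e(H)/v(H)>e(F)/v(F)$ for every proper subgraph $F$ with at least one edge. $\mathcal{T}(H,G)=\mathrm{inj}(H,G)/|\mathrm{Aut}(H)|$ is the number of unlabelled copies of $H$ in $G$ ($\mathrm{inj}$ counts injective edge-preserving maps, $\mathrm{Aut}(H)$ the automorphism group). $G(m,p)$ is the Erdős–Rényi random graph. *)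

theory Defs
  imports "HOL-Probability.Probability"
begin

definition is_graph :: "nat \<Rightarrow> nat set set \<Rightarrow> bool" where
  "is_graph v E \<longleftrightarrow> (\<forall>e\<in>E. \<exists>a b. a \<noteq> b \<and> a < v \<and> b < v \<and> e = {a, b})"

definition all_edges :: "nat \<Rightarrow> nat set set" where
  "all_edges m = {{a, b} | a b. a \<noteq> b \<and> a < m \<and> b < m}"

definition subgraphs :: "nat \<Rightarrow> nat set set \<Rightarrow> (nat set \<times> nat set set) set" where
  "subgraphs v EH = {(V, E). V \<subseteq> {0..<v} \<and> E \<subseteq> EH \<and> (\<forall>e\<in>E. e \<subseteq> V)}"

definition strictly_balanced :: "nat \<Rightarrow> nat set set \<Rightarrow> bool" where
  "strictly_balanced v EH \<longleftrightarrow>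
     (\<forall>(V, E) \<in> subgraphs v EH. E \<noteq> {} \<and> (V, E) \<noteq> ({0..<v}, EH) \<longrightarrow>
        real (card E) / real (card V) < real (card EH) / real v)"

definition max_density :: "nat \<Rightarrow> nat set set \<Rightarrow> real" where
  "max_density v EH = Max {real (card E) / real (card V) | V E. (V, E) \<in> subgraphs v EH \<and> E \<noteq> {}}"

definition Aut :: "nat \<Rightarrow> nat set set \<Rightarrow> (nat \<Rightarrow> nat) set" where
  "Aut v EH = {\<sigma> \<in> {0..<v} \<rightarrow>\<^sub>E {0..<v}. bij_betw \<sigma> {0..<v} {0..<v} \<and> (\<lambda>e. \<sigma> ` e) ` EH = EH}"

definition inj_hom :: "nat \<Rightarrow> nat set set \<Rightarrow> nat \<Rightarrow> nat set set \<Rightarrow> (nat \<Rightarrow> nat) set" where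
  "inj_hom v EH m G = {f \<in> {0..<v} \<rightarrow>\<^sub>E {0..<m}. inj_on f {0..<v} \<and> (\<forall>e\<in>EH. f ` e \<in> G)}"

text \<open>T(H,G) = inj(H,G) / |Aut(H)|, number of unlabelled copies of H in G.\<close>
definition copies :: "nat \<Rightarrow> nat set set \<Rightarrow> nat \<Rightarrow> nat set set \<Rightarrow> real" where
  "copies v EH m G = real (card (inj_hom v EH m G)) / real (card (Aut v EH))"

definition gnp :: "nat \<Rightarrow> real \<Rightarrow> nat set set pmf" where
  "gnp m p = map_pmf (\<lambda>f. {e \<in> all_edges m. f e})
               (Pi_pmf (all_edges m) False (\<lambda>_. bernoulli_pmf p))"

end

theory Submission
  imports Defs "HOL-Real_Asymp.Real_Asymp"
begin


lemma root_unique: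
  fixes h :: "nat \<Rightarrow> real" and I :: "nat set"
  defines "F \<equiv> (\<lambda>l. \<Sum>i\<in>I. h i * exp (- l * h i))"
  assumes fin: "finite I" and l12: "l1 < l2" and F1: "F l1 > 0" and F2: "F l2 < 0"
  shows "(\<exists>!l. F l = 0) \<and> l1 < (THE l. F l = 0) \<and> (THE l. F l = 0) < l2"
proof -
  have term_mono: "h i * exp (- b * h i) \<le> h i * exp (- a * h i)" if "a \<le> b" for a b i
  proof (cases "h i \<ge> 0")
    case True
    have "exp (- b * h i) \<le> exp (- a * h i)" using that True by (simp add: mult_right_mono)
    then show ?thesis using True by (simp add: mult_left_mono)
  next
    case False
    have "exp (- a * h i) \<le> exp (- b * h i)" using that False
      by (simp add: mult_right_mono_neg)
    then show ?thesis using False by (simp add: mult_left_mono_neg)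
  qed
  have term_strict: "h i * exp (- b * h i) < h i * exp (- a * h i)" if "a < b" "h i \<noteq> 0" for a b i
  proof (cases "h i > 0")
    case True
    have "exp (- b * h i) < exp (- a * h i)" using that True by simp
    then show ?thesis using True by simp
  next
    case False
    then have hn: "h i < 0" using that by simp
    have "exp (- a * h i) < exp (- b * h i)" using that hn
      by (simp add: mult_strict_right_mono_neg)
    then show ?thesis using hn by simp
  qed
  obtain i0 where i0: "i0 \<in> I" "h i0 \<noteq> 0"
  proof -
    have "\<exists>i\<in>I. h i \<noteq> 0"
    proof (rule ccontr)
      assume "\<not> ?thesis"
      then have "F l1 = 0" unfolding F_def by simp
      then show False using F1 by simp
    qed
    then show ?thesis using that by blast
  qed
  have Fstrict: "F b < F a" if "a < b" for a b
    unfolding F_def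
  proof (rule sum_strict_mono_ex1[OF fin])
    show "\<forall>x\<in>I. h x * exp (- b * h x) \<le> h x * exp (- a * h x)" using term_mono that by auto
    show "\<exists>x\<in>I. h x * exp (- b * h x) < h x * exp (- a * h x)" using term_strict[OF that i0(2)] i0(1) by blast
  qed
  have cont: "continuous_on {l1..l2} F"
    unfolding F_def by (intro continuous_intros)
  obtain l where l: "l1 \<le> l" "l \<le> l2" "F l = 0"
    using IVT2'[of F l2 0 l1] F1 F2 l12 cont by force
  have uniq: "x = l" if "F x = 0" for x
    using Fstrict[of x l] Fstrict[of l x] that l by (cases x l rule: linorder_cases) auto
  have ex1: "\<exists>!l. F l = 0" using l uniq by blast
  have the: "(THE l. F l = 0) = l" using uniq l by blast
  have "l \<noteq> l1" "l \<noteq> l2" using l F1 F2 by auto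
  then show ?thesis using ex1 the l by auto
qed

lemma hoeff_bound:
  fixes Q :: "'g pmf" and \<phi> :: "'g \<Rightarrow> real"
  assumes n: "n > 0" and bnd: "\<And>x. A \<le> \<phi> x \<and> \<phi> x \<le> B" and AB: "A < B" and \<epsilon>: "\<epsilon> \<ge> 0"
  shows "measure_pmf.prob (Pi_pmf {..<n} d (\<lambda>_. Q))
           {\<omega>. (\<Sum>i<n. \<phi> (\<omega> i)) \<ge> real n * measure_pmf.expectation Q \<phi> + \<epsilon>}
         \<le> exp (-2 * \<epsilon>\<^sup>2 / (real n * (B - A)\<^sup>2))"
proof -
  define M where "M = Pi_pmf {..<n} d (\<lambda>_. Q)"
  have comp: "distr (measure_pmf M) borel (\<lambda>\<omega>. \<phi> (\<omega> i)) = distr (measure_pmf Q) borel \<phi>"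
    if i: "i < n" for i
  proof -
    have "distr (measure_pmf M) borel (\<lambda>\<omega>. \<phi> (\<omega> i)) =
          distr (measure_pmf (map_pmf (\<lambda>\<omega>. \<omega> i) M)) borel \<phi>"
      unfolding map_pmf_rep_eq by (subst distr_distr) (auto simp: o_def)
    also have "map_pmf (\<lambda>\<omega>. \<omega> i) M = Q"
      unfolding M_def using i by (subst Pi_pmf_component) auto
    finally show ?thesis .
  qed
  interpret H: Hoeffding_ineq_iid "measure_pmf M" "{..<n}" "\<lambda>i \<omega>. \<phi> (\<omega> i)" "\<lambda>\<omega>. \<phi> (\<omega> 0)" A B
      "measure_pmf.expectation Q \<phi>"
  proof unfold_locales
    show "prob_space.indep_vars (measure_pmf M) (\<lambda>_. borel) (\<lambda>i \<omega>. \<phi> (\<omega> i)) {..<n}"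
      unfolding M_def
      by (intro prob_space.indep_vars_compose2[OF _ indep_vars_Pi_pmf])
         (auto simp: measure_pmf.prob_space_axioms)
  next
    have "measure_pmf.expectation M (\<lambda>\<omega>. \<phi> (\<omega> 0)) =
          measure_pmf.expectation (map_pmf (\<lambda>\<omega>. \<omega> 0) M) \<phi>"
      by simp
    also have "map_pmf (\<lambda>\<omega>. \<omega> 0) M = Q"
      using n by (simp add: M_def Pi_pmf_component)
    finally show "measure_pmf.expectation Q \<phi> \<equiv> measure_pmf.expectation M (\<lambda>\<omega>. \<phi> (\<omega> 0))" by simp
  qed (use comp n bnd in auto)
  have [simp]: "{..<n} \<noteq> {}" using n by auto
  show ?thesis
    using H.Hoeffding_ineq_ge[OF \<epsilon> AB] by (simp add: M_def)
qed

lemma exp_lin_tendsto: "K > 0 \<Longrightarrow> (\<lambda>n::nat. exp (- K * real n)) \<longlonglongrightarrow> 0"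
  by real_asymp

lemma lln_neg:
  fixes Q :: "nat \<Rightarrow> 'g pmf" and \<phi> :: "nat \<Rightarrow> 'g \<Rightarrow> real"
  assumes bnd: "\<And>n x. A \<le> \<phi> n x \<and> \<phi> n x \<le> B" and AB: "A < B" and \<eta>: "\<eta> > 0"
   and ev: "eventually (\<lambda>n. measure_pmf.expectation (Q n) (\<phi> n) \<le> -\<eta>) sequentially"
  shows "(\<lambda>n. measure_pmf.prob (Pi_pmf {..<n} d (\<lambda>_. Q n)) {\<omega>. (\<Sum>i<n. \<phi> n (\<omega> i)) < 0}) \<longlonglongrightarrow> 1"
proof -
  define K where "K = 2 * \<eta>\<^sup>2 / (B - A)\<^sup>2"
  have K: "K > 0" using \<eta> AB by (simp add: K_def)
  have lim: "(\<lambda>n. 1 - exp (- K * real n)) \<longlonglongrightarrow> 1"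
    using tendsto_diff[OF tendsto_const exp_lin_tendsto[OF K], of 1] by simp
  have ev2: "eventually (\<lambda>n. 1 - exp (- K * real n) \<le>
      measure_pmf.prob (Pi_pmf {..<n} d (\<lambda>_. Q n)) {\<omega>. (\<Sum>i<n. \<phi> n (\<omega> i)) < 0}) sequentially"
    using ev eventually_gt_at_top[of 0]
  proof eventually_elim
    case (elim n)
    define P where "P = Pi_pmf {..<n} d (\<lambda>_. Q n)"
    have sub: "{\<omega>. (\<Sum>i<n. \<phi> n (\<omega> i)) \<ge> 0} \<subseteq>
        {\<omega>. (\<Sum>i<n. \<phi> n (\<omega> i)) \<ge> real n * measure_pmf.expectation (Q n) (\<phi> n) + real n * \<eta>}"
    proof -
      have "real n * measure_pmf.expectation (Q n) (\<phi> n) + real n * \<eta> \<le> 0"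
        using elim by (smt (verit, best) mult_left_mono of_nat_0_le_iff distrib_left)
      then show ?thesis by auto
    qed
    have "measure_pmf.prob P {\<omega>. (\<Sum>i<n. \<phi> n (\<omega> i)) \<ge> 0} \<le>
          measure_pmf.prob P {\<omega>. (\<Sum>i<n. \<phi> n (\<omega> i)) \<ge> real n * measure_pmf.expectation (Q n) (\<phi> n) + real n * \<eta>}"
      by (rule measure_pmf.finite_measure_mono[OF sub]) simp
    also have "\<dots> \<le> exp (-2 * (real n * \<eta>)\<^sup>2 / (real n * (B - A)\<^sup>2))"
      unfolding P_def using elim \<eta> by (intro hoeff_bound[OF _ bnd AB]) auto
    also have "-2 * (real n * \<eta>)\<^sup>2 / (real n * (B - A)\<^sup>2) = - K * real n"
    proof -
      have "(B - A)\<^sup>2 > 0" using AB by simp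
      then show ?thesis using elim by (simp add: K_def power2_eq_square divide_simps)
    qed
    finally have le: "measure_pmf.prob P {\<omega>. (\<Sum>i<n. \<phi> n (\<omega> i)) \<ge> 0} \<le> exp (- K * real n)" .
    have "{\<omega>. (\<Sum>i<n. \<phi> n (\<omega> i)) < 0} = UNIV - {\<omega>. (\<Sum>i<n. \<phi> n (\<omega> i)) \<ge> 0}" by auto
    then have "measure_pmf.prob P {\<omega>. (\<Sum>i<n. \<phi> n (\<omega> i)) < 0} = 1 - measure_pmf.prob P {\<omega>. (\<Sum>i<n. \<phi> n (\<omega> i)) \<ge> 0}"
      using measure_pmf.prob_compl[of "{\<omega>. (\<Sum>i<n. \<phi> n (\<omega> i)) \<ge> 0}" P] by simp
    then show ?case using le unfolding P_def by simp
  qed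
  show ?thesis
    by (rule tendsto_sandwich[OF ev2 _ lim tendsto_const]) (simp add: measure_pmf.prob_le_1)
qed

lemma exp_split:
  fixes Q :: "'g pmf" and \<psi> :: "'g \<Rightarrow> nat" and \<phi> :: "nat \<Rightarrow> real"
  assumes bd: "\<And>k. \<bar>\<phi> k\<bar> \<le> Bd"
  shows "measure_pmf.expectation Q (\<lambda>x. \<phi> (\<psi> x)) =
           (\<Sum>k<N. measure_pmf.prob Q {x. \<psi> x = k} * \<phi> k) +
           measure_pmf.expectation Q (\<lambda>x. if \<psi> x < N then 0 else \<phi> (\<psi> x))"
proof -
  have int: "integrable (measure_pmf Q) (\<lambda>x. f (\<psi> x))" if "\<And>k. \<bar>f k\<bar> \<le> Bd" for f :: "nat \<Rightarrow> real"
    by (rule measure_pmf.integrable_const_bound[where B=Bd]) (use that in auto)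
  have eq: "\<phi> (\<psi> x) = (\<Sum>k<N. \<phi> k * indicator {x. \<psi> x = k} x) +
              (if \<psi> x < N then 0 else \<phi> (\<psi> x))" for x
  proof (cases "\<psi> x < N")
    case True
    have "(\<Sum>k<N. \<phi> k * indicator {x. \<psi> x = k} x) = (\<Sum>k\<in>{\<psi> x}. \<phi> k * indicator {x. \<psi> x = k} x)"
      by (rule sum.mono_neutral_right) (use True in auto)
    then show ?thesis using True by simp
  next
    case False
    have "(\<Sum>k<N. \<phi> k * indicator {x. \<psi> x = k} x) = 0"
      by (rule sum.neutral) (use False in auto)
    then show ?thesis using False by simp
  qed
  have "measure_pmf.expectation Q (\<lambda>x. \<phi> (\<psi> x)) =
        measure_pmf.expectation Q (\<lambda>x. (\<Sum>k<N. \<phi> k * indicator {x. \<psi> x = k} x) +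
              (if \<psi> x < N then 0 else \<phi> (\<psi> x)))"
    by (subst eq) simp
  also have "\<dots> = measure_pmf.expectation Q (\<lambda>x. (\<Sum>k<N. \<phi> k * indicator {x. \<psi> x = k} x)) +
              measure_pmf.expectation Q (\<lambda>x. if \<psi> x < N then 0 else \<phi> (\<psi> x))"
  proof (rule Bochner_Integration.integral_add)
    show "integrable (measure_pmf Q) (\<lambda>x. \<Sum>k<N. \<phi> k * indicator {x. \<psi> x = k} x)"
      by (intro Bochner_Integration.integrable_sum integrable_mult_right integrable_real_indicator) (auto simp: measure_pmf.emeasure_eq_measure)
    show "integrable (measure_pmf Q) (\<lambda>x. if \<psi> x < N then 0 else \<phi> (\<psi> x))"
      using int[of "\<lambda>k. if k < N then 0 else \<phi> k"] bd
      by (smt (verit, del_insts) Bochner_Integration.integrable_cong abs_0 abs_ge_zero)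
  qed
  also have "measure_pmf.expectation Q (\<lambda>x. (\<Sum>k<N. \<phi> k * indicator {x. \<psi> x = k} x)) =
             (\<Sum>k<N. measure_pmf.prob Q {x. \<psi> x = k} * \<phi> k)"
    by (subst Bochner_Integration.integral_sum) (simp_all add: measure_pmf.emeasure_eq_measure mult.commute)
  finally show ?thesis .
qed

lemma exp_upper:
  fixes Q :: "'g pmf" and \<psi> :: "'g \<Rightarrow> nat" and \<phi> :: "nat \<Rightarrow> real"
  assumes bd: "\<And>k. \<bar>\<phi> k\<bar> \<le> Bd" and tail: "\<And>k. k \<ge> N \<Longrightarrow> \<phi> k \<le> \<eta>" and \<eta>: "\<eta> \<ge> 0"
  shows "measure_pmf.expectation Q (\<lambda>x. \<phi> (\<psi> x)) \<le> (\<Sum>k<N. measure_pmf.prob Q {x. \<psi> x = k} * \<phi> k) + \<eta>"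
proof -
  have "measure_pmf.expectation Q (\<lambda>x. if \<psi> x < N then 0 else \<phi> (\<psi> x)) \<le> measure_pmf.expectation Q (\<lambda>x. \<eta>)"
  proof (rule integral_mono)
    show "integrable (measure_pmf Q) (\<lambda>x. if \<psi> x < N then 0 else \<phi> (\<psi> x))"
    proof (rule measure_pmf.integrable_const_bound[where B=Bd])
      have "0 \<le> Bd" using bd[of 0] by linarith
      then show "AE x in measure_pmf Q. norm (if \<psi> x < N then 0 else \<phi> (\<psi> x)) \<le> Bd"
        using bd by auto
    qed simp
  qed (use tail \<eta> in auto)
  moreover have "measure_pmf.expectation Q (\<lambda>x. \<phi> (\<psi> x)) =
           (\<Sum>k<N. measure_pmf.prob Q {x. \<psi> x = k} * \<phi> k) +
           measure_pmf.expectation Q (\<lambda>x. if \<psi> x < N then 0 else \<phi> (\<psi> x))"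
    by (rule exp_split) (rule bd)
  ultimately show ?thesis by simp
qed

lemma exp_lower:
  fixes Q :: "'g pmf" and \<psi> :: "'g \<Rightarrow> nat" and \<phi> :: "nat \<Rightarrow> real"
  assumes bd: "\<And>k. \<bar>\<phi> k\<bar> \<le> Bd" and tail: "\<And>k. k \<ge> N \<Longrightarrow> \<phi> k \<ge> 0"
  shows "measure_pmf.expectation Q (\<lambda>x. \<phi> (\<psi> x)) \<ge> (\<Sum>k<N. measure_pmf.prob Q {x. \<psi> x = k} * \<phi> k)"
proof -
  have "measure_pmf.expectation Q (\<lambda>x. if \<psi> x < N then 0 else \<phi> (\<psi> x)) \<ge> 0"
    by (rule Bochner_Integration.integral_nonneg) (use tail in auto)
  moreover have "measure_pmf.expectation Q (\<lambda>x. \<phi> (\<psi> x)) =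
           (\<Sum>k<N. measure_pmf.prob Q {x. \<psi> x = k} * \<phi> k) +
           measure_pmf.expectation Q (\<lambda>x. if \<psi> x < N then 0 else \<phi> (\<psi> x))"
    by (rule exp_split) (rule bd)
  ultimately show ?thesis by simp
qed

lemma exp_series_sums: "(\<lambda>k. (s::real) ^ k / fact k) sums exp s"
  using exp_converges[of s] by (simp add: divide_inverse mult.commute)

lemma k_exp_series_sums: "(\<lambda>k. real k * (s::real) ^ k / fact k) sums (s * exp s)"
proof -
  have "(\<lambda>k. real (Suc k) * s ^ (Suc k) / fact (Suc k)) = (\<lambda>k. s * (s ^ k / fact k))"
  proof (rule ext)
    fix k
    have "fact (Suc k) = real (Suc k) * (fact k :: real)" by simp
    then show "real (Suc k) * s ^ (Suc k) / fact (Suc k) = s * (s ^ k / fact k)"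
      by (simp del: fact_Suc of_nat_Suc)
  qed
  moreover have "(\<lambda>k. s * (s ^ k / fact k)) sums (s * exp s)"
    by (rule sums_mult[OF exp_series_sums])
  ultimately have "(\<lambda>k. real (Suc k) * s ^ (Suc k) / fact (Suc k)) sums (s * exp s)" by simp
  then have "(\<lambda>k. real k * s ^ k / fact k) sums (s * exp s + real 0 * s ^ 0 / fact 0)"
    by (rule sums_Suc_iff[THEN iffD1])
  then show ?thesis by simp
qed

lemma poisson_g_sums:
  fixes \<mu> h0 l :: real
  shows "(\<lambda>k. \<mu> ^ k / fact k * exp (-\<mu>) * ((real k - h0) * exp (- l * (real k - h0))))
          sums (exp (l * h0 - \<mu>) * exp (\<mu> * exp (-l)) * (\<mu> * exp (-l) - h0))"
proof -
  define s where "s = \<mu> * exp (-l)"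
  have eq: "\<mu> ^ k / fact k * exp (-\<mu>) * ((real k - h0) * exp (- l * (real k - h0))) =
        exp (l * h0 - \<mu>) * (real k * s ^ k / fact k - h0 * (s ^ k / fact k))" for k
  proof -
    have "exp (- l * (real k - h0)) = exp (l * h0) * exp (-l) ^ k"
      by (simp add: exp_of_nat_mult[symmetric] exp_add[symmetric] algebra_simps)
    moreover have "exp (l * h0 - \<mu>) = exp (l * h0) * exp (-\<mu>)"
      by (simp add: exp_diff exp_minus field_simps)
    ultimately show ?thesis by (simp add: s_def power_mult_distrib field_simps)
  qed
  have "(\<lambda>k. exp (l * h0 - \<mu>) * (real k * s ^ k / fact k - h0 * (s ^ k / fact k)))
         sums (exp (l * h0 - \<mu>) * (s * exp s - h0 * exp s))"
    by (intro sums_mult sums_diff k_exp_series_sums exp_series_sums)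
  then show ?thesis unfolding eq s_def[symmetric] by (simp add: algebra_simps)
qed

definition gfun :: "real \<Rightarrow> real \<Rightarrow> nat \<Rightarrow> real" where
  "gfun h0 l k = (real k - h0) * exp (- l * (real k - h0))"

lemma gfun_lower:
  assumes "h0 > 0"
  shows "gfun h0 l k \<ge> - h0 * exp (\<bar>l\<bar> * h0)"
proof (cases "real k \<ge> h0")
  case True
  then have "gfun h0 l k \<ge> 0" unfolding gfun_def by simp
  moreover have "- h0 * exp (\<bar>l\<bar> * h0) \<le> 0" using assms by simp
  ultimately show ?thesis by linarith
next
  case False
  define x where "x = real k - h0"
  have x: "- h0 \<le> x" "x < 0" using False by (auto simp: x_def)
  have "- l * x \<le> \<bar>l\<bar> * h0"
  proof -
    have "\<bar>x\<bar> \<le> h0" using x by simp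
    then have "\<bar>- l * x\<bar> \<le> \<bar>l\<bar> * h0" by (simp add: abs_mult mult_left_mono)
    then show ?thesis by linarith
  qed
  then have e: "exp (- l * x) \<le> exp (\<bar>l\<bar> * h0)" by simp
  have "x * exp (- l * x) \<ge> - h0 * exp (- l * x)" using x by (intro mult_right_mono) auto
  moreover have "- h0 * exp (- l * x) \<ge> - h0 * exp (\<bar>l\<bar> * h0)" using e assms by simp
  ultimately show ?thesis unfolding gfun_def x_def[symmetric] by linarith
qed

lemma gfun_nonneg: "real k \<ge> h0 \<Longrightarrow> gfun h0 l k \<ge> 0"
  unfolding gfun_def by simp

lemma gfun_upper:
  assumes "l > 0"
  shows "gfun h0 l k \<le> 1 / l"
proof (cases "real k \<ge> h0")
  case False
  then have "gfun h0 l k \<le> 0" unfolding gfun_def by (simp add: mult_nonpos_nonneg)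
  moreover have "1 / l > 0" using assms by simp
  ultimately show ?thesis by linarith
next
  case True
  define x where "x = real k - h0"
  have x: "x \<ge> 0" using True by (simp add: x_def)
  have "exp (l * x) \<ge> 1 + l * x" by (rule exp_ge_add_one_self)
  then have "l * x \<le> exp (l * x)" by linarith
  then have "x \<le> exp (l * x) / l" using assms by (simp add: field_simps)
  then have "x * exp (- l * x) \<le> exp (l * x) / l * exp (- l * x)"
    by (rule mult_right_mono) simp
  also have "\<dots> = 1 / l" by (simp add: exp_minus field_simps)
  finally show ?thesis unfolding gfun_def x_def[symmetric] .
qed

lemma gfun_lim: "l > 0 \<Longrightarrow> (\<lambda>k. gfun h0 l k) \<longlonglongrightarrow> 0"
  unfolding gfun_def by real_asymp

definition poi :: "real \<Rightarrow> nat \<Rightarrow> real" where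
  "poi \<mu> k = \<mu> ^ k / fact k * exp (-\<mu>)"

lemma poi_g_sums: "(\<lambda>k. poi \<mu> k * gfun h0 l k) sums
     (exp (l * h0 - \<mu>) * exp (\<mu> * exp (-l)) * (\<mu> * exp (-l) - h0))"
  unfolding poi_def gfun_def by (rule poisson_g_sums)

lemma finsum_conv:
  assumes conv: "\<And>k. (\<lambda>n. P n k) \<longlonglongrightarrow> poi \<mu> k"
  shows "(\<lambda>n. \<Sum>k<N. P n k * f k) \<longlonglongrightarrow> (\<Sum>k<N. poi \<mu> k * f k)"
  by (intro tendsto_sum tendsto_mult_right conv)

lemma part_a:
  fixes Q :: "nat \<Rightarrow> 'g pmf" and \<psi> :: "nat \<Rightarrow> 'g \<Rightarrow> nat"
  assumes h0: "h0 > 0" and \<mu>: "\<mu> > 0" and l: "l > 0" and s: "\<mu> * exp (-l) < h0"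
    and conv: "\<And>k. (\<lambda>n. measure_pmf.prob (Q n) {x. \<psi> n x = k}) \<longlonglongrightarrow> poi \<mu> k"
  shows "(\<lambda>n. measure_pmf.prob (Pi_pmf {..<n} d (\<lambda>_. Q n))
            {\<omega>. (\<Sum>i<n. gfun h0 l (\<psi> n (\<omega> i))) < 0}) \<longlonglongrightarrow> 1"
proof -
  define L where "L = exp (l * h0 - \<mu>) * exp (\<mu> * exp (-l)) * (\<mu> * exp (-l) - h0)"
  have L: "L < 0" unfolding L_def using s by (simp add: mult_pos_neg)
  define \<eta> where "\<eta> = - L / 4"
  have \<eta>: "\<eta> > 0" using L by (simp add: \<eta>_def)
  obtain N1 where N1: "\<And>k. k \<ge> N1 \<Longrightarrow> gfun h0 l k \<le> \<eta>"
  proof -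
    have "eventually (\<lambda>k. dist (gfun h0 l k) 0 < \<eta>) sequentially"
      using gfun_lim[OF l, of h0] \<eta> by (rule tendstoD)
    then obtain N where "\<And>k. k \<ge> N \<Longrightarrow> dist (gfun h0 l k) 0 < \<eta>"
      by (auto simp: eventually_sequentially)
    then show ?thesis using that by (fastforce simp: dist_real_def)
  qed
  obtain N2 where N2: "\<And>N. N \<ge> N2 \<Longrightarrow> (\<Sum>k<N. poi \<mu> k * gfun h0 l k) \<le> L + \<eta>"
  proof -
    have "(\<lambda>N. \<Sum>k<N. poi \<mu> k * gfun h0 l k) \<longlonglongrightarrow> L"
      using poi_g_sums unfolding L_def sums_def .
    then have "eventually (\<lambda>N. dist (\<Sum>k<N. poi \<mu> k * gfun h0 l k) L < \<eta>) sequentially"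
      using \<eta> by (rule tendstoD)
    then obtain N where "\<And>M. M \<ge> N \<Longrightarrow> dist (\<Sum>k<M. poi \<mu> k * gfun h0 l k) L < \<eta>"
      by (auto simp: eventually_sequentially)
    then show ?thesis using that by (fastforce simp: dist_real_def)
  qed
  define N where "N = max N1 N2"
  have lim: "(\<lambda>n. \<Sum>k<N. measure_pmf.prob (Q n) {x. \<psi> n x = k} * gfun h0 l k) \<longlonglongrightarrow>
        (\<Sum>k<N. poi \<mu> k * gfun h0 l k)"
    by (rule finsum_conv[OF conv])
  have ev1: "eventually (\<lambda>n. (\<Sum>k<N. measure_pmf.prob (Q n) {x. \<psi> n x = k} * gfun h0 l k) < L + 2 * \<eta>) sequentially"
  proof -
    have "(\<Sum>k<N. poi \<mu> k * gfun h0 l k) < L + 2 * \<eta>" using N2[of N] \<eta> by (simp add: N_def)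
    then show ?thesis using order_tendstoD(2)[OF lim] by blast
  qed
  define Bd where "Bd = h0 * exp (\<bar>l\<bar> * h0) + 1 / l"
  have p1: "h0 * exp (\<bar>l\<bar> * h0) > 0" using h0 by simp
  have p2: "1 / l > 0" using l by simp
  have bd: "\<bar>gfun h0 l k\<bar> \<le> Bd" for k
    using gfun_lower[OF h0, of l k] gfun_upper[OF l, of h0 k] p1 p2 unfolding Bd_def
    by linarith
  have ev: "eventually (\<lambda>n. measure_pmf.expectation (Q n) (\<lambda>x. gfun h0 l (\<psi> n x)) \<le> -\<eta>) sequentially"
    using ev1
  proof eventually_elim
    case (elim n)
    have "measure_pmf.expectation (Q n) (\<lambda>x. gfun h0 l (\<psi> n x)) \<le>
          (\<Sum>k<N. measure_pmf.prob (Q n) {x. \<psi> n x = k} * gfun h0 l k) + \<eta>"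
      by (rule exp_upper[OF bd]) (use N1 \<eta> in \<open>auto simp: N_def\<close>)
    then show ?case using elim unfolding \<eta>_def by simp
  qed
  show ?thesis
  proof (rule lln_neg[where A = "- h0 * exp (\<bar>l\<bar> * h0)" and B = "1 / l" and \<phi> = "\<lambda>n x. gfun h0 l (\<psi> n x)", OF _ _ \<eta> ev])
    show "- h0 * exp (\<bar>l\<bar> * h0) \<le> gfun h0 l (\<psi> n x) \<and> gfun h0 l (\<psi> n x) \<le> 1 / l" for n x
      using gfun_lower[OF h0] gfun_upper[OF l] by auto
    show "- h0 * exp (\<bar>l\<bar> * h0) < 1 / l" using p1 p2 by linarith
  qed
qed

lemma part_b:
  fixes Q :: "nat \<Rightarrow> 'g pmf" and \<psi> :: "nat \<Rightarrow> 'g \<Rightarrow> nat"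
  assumes h0: "h0 > 0" and \<mu>: "\<mu> > 0" and s: "\<mu> * exp (-l) > h0"
    and conv: "\<And>k. (\<lambda>n. measure_pmf.prob (Q n) {x. \<psi> n x = k}) \<longlonglongrightarrow> poi \<mu> k"
  shows "(\<lambda>n. measure_pmf.prob (Pi_pmf {..<n} d (\<lambda>_. Q n))
            {\<omega>. (\<Sum>i<n. gfun h0 l (\<psi> n (\<omega> i))) > 0}) \<longlonglongrightarrow> 1"
proof -
  define L where "L = exp (l * h0 - \<mu>) * exp (\<mu> * exp (-l)) * (\<mu> * exp (-l) - h0)"
  have L: "L > 0" unfolding L_def using s by simp
  obtain N2 where N2: "\<And>N. N \<ge> N2 \<Longrightarrow> (\<Sum>k<N. poi \<mu> k * gfun h0 l k) \<ge> L / 2"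
  proof -
    have "(\<lambda>N. \<Sum>k<N. poi \<mu> k * gfun h0 l k) \<longlonglongrightarrow> L"
      using poi_g_sums unfolding L_def sums_def .
    then have "eventually (\<lambda>N. dist (\<Sum>k<N. poi \<mu> k * gfun h0 l k) L < L / 2) sequentially"
      using L by (intro tendstoD) auto
    then obtain N where N: "\<And>M. M \<ge> N \<Longrightarrow> dist (\<Sum>k<M. poi \<mu> k * gfun h0 l k) L < L / 2"
      by (auto simp: eventually_sequentially)
    have "(\<Sum>k<M. poi \<mu> k * gfun h0 l k) \<ge> L / 2" if "M \<ge> N" for M
      using N[OF that] unfolding dist_real_def by linarith
    then show ?thesis using that by blast
  qed
  define N where "N = max N2 (nat \<lceil>h0\<rceil>)"
  have tailN: "k \<ge> N \<Longrightarrow> gfun h0 l k \<ge> 0" for k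
  proof -
    assume "k \<ge> N"
    then have "real k \<ge> h0" unfolding N_def by linarith
    then show ?thesis by (rule gfun_nonneg)
  qed
  define K where "K = 1 + (\<Sum>k<N. \<bar>gfun h0 l k\<bar>)"
  define \<phi> where "\<phi> = (\<lambda>k. min (gfun h0 l k) K)"
  define A where "A = - h0 * exp (\<bar>l\<bar> * h0)"
  have A: "A < 0" using h0 by (simp add: A_def)
  have K: "K \<ge> 1" unfolding K_def by (simp add: sum_nonneg)
  have \<phi>_bnd: "A \<le> \<phi> k \<and> \<phi> k \<le> K" for k
    using gfun_lower[OF h0, of l k] K A unfolding \<phi>_def by (auto simp: A_def)
  have \<phi>_eq: "k < N \<Longrightarrow> \<phi> k = gfun h0 l k" for k
  proof -
    assume "k < N"
    then have "\<bar>gfun h0 l k\<bar> \<le> (\<Sum>k<N. \<bar>gfun h0 l k\<bar>)"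
      by (intro member_le_sum) auto
    then show ?thesis unfolding \<phi>_def K_def by simp
  qed
  have bd: "\<bar>\<phi> k\<bar> \<le> K - A" for k using \<phi>_bnd[of k] A K by auto
  have lim: "(\<lambda>n. \<Sum>k<N. measure_pmf.prob (Q n) {x. \<psi> n x = k} * gfun h0 l k) \<longlonglongrightarrow>
        (\<Sum>k<N. poi \<mu> k * gfun h0 l k)"
    by (rule finsum_conv[OF conv])
  have ev1: "eventually (\<lambda>n. (\<Sum>k<N. measure_pmf.prob (Q n) {x. \<psi> n x = k} * gfun h0 l k) > L / 4) sequentially"
  proof -
    have "(\<Sum>k<N. poi \<mu> k * gfun h0 l k) > L / 4" using N2[of N] L by (simp add: N_def)
    then show ?thesis using order_tendstoD(1)[OF lim] by blast
  qed
  have ev: "eventually (\<lambda>n. measure_pmf.expectation (Q n) (\<lambda>x. - \<phi> (\<psi> n x)) \<le> - (L / 4)) sequentially"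
    using ev1
  proof eventually_elim
    case (elim n)
    have "measure_pmf.expectation (Q n) (\<lambda>x. \<phi> (\<psi> n x)) \<ge>
          (\<Sum>k<N. measure_pmf.prob (Q n) {x. \<psi> n x = k} * \<phi> k)"
      by (rule exp_lower[OF bd]) (use tailN K in \<open>auto simp: \<phi>_def\<close>)
    also have "(\<Sum>k<N. measure_pmf.prob (Q n) {x. \<psi> n x = k} * \<phi> k) =
               (\<Sum>k<N. measure_pmf.prob (Q n) {x. \<psi> n x = k} * gfun h0 l k)"
      by (intro sum.cong) (auto simp: \<phi>_eq)
    finally show ?case using elim by simp
  qed
  have main: "(\<lambda>n. measure_pmf.prob (Pi_pmf {..<n} d (\<lambda>_. Q n))
            {\<omega>. (\<Sum>i<n. - \<phi> (\<psi> n (\<omega> i))) < 0}) \<longlonglongrightarrow> 1"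
  proof (rule lln_neg[where A = "- K" and B = "- A" and \<phi> = "\<lambda>n x. - \<phi> (\<psi> n x)", OF _ _ _ ev])
    show "- K \<le> - \<phi> (\<psi> n x) \<and> - \<phi> (\<psi> n x) \<le> - A" for n x using \<phi>_bnd by auto
    show "- K < - A" using A K by simp
    show "L / 4 > 0" using L by simp
  qed
  have sub: "{\<omega>. (\<Sum>i<n. - \<phi> (\<psi> n (\<omega> i))) < 0} \<subseteq> {\<omega>. (\<Sum>i<n. gfun h0 l (\<psi> n (\<omega> i))) > 0}" for n
  proof
    fix \<omega> assume "\<omega> \<in> {\<omega>. (\<Sum>i<n. - \<phi> (\<psi> n (\<omega> i))) < 0}"
    then have "(\<Sum>i<n. \<phi> (\<psi> n (\<omega> i))) > 0" by (simp add: sum_negf)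
    moreover have "(\<Sum>i<n. \<phi> (\<psi> n (\<omega> i))) \<le> (\<Sum>i<n. gfun h0 l (\<psi> n (\<omega> i)))"
      by (intro sum_mono) (simp add: \<phi>_def)
    ultimately show "\<omega> \<in> {\<omega>. (\<Sum>i<n. gfun h0 l (\<psi> n (\<omega> i))) > 0}" by simp
  qed
  show ?thesis
  proof (rule tendsto_sandwich[OF _ _ main tendsto_const])
    show "\<forall>\<^sub>F n in sequentially. measure_pmf.prob (Pi_pmf {..<n} d (\<lambda>_. Q n)) {\<omega>. (\<Sum>i<n. - \<phi> (\<psi> n (\<omega> i))) < 0}
        \<le> measure_pmf.prob (Pi_pmf {..<n} d (\<lambda>_. Q n)) {\<omega>. (\<Sum>i<n. gfun h0 l (\<psi> n (\<omega> i))) > 0}"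
      by (intro always_eventually allI measure_pmf.finite_measure_mono sub) simp
    show "\<forall>\<^sub>F n in sequentially. measure_pmf.prob (Pi_pmf {..<n} d (\<lambda>_. Q n)) {\<omega>. (\<Sum>i<n. gfun h0 l (\<psi> n (\<omega> i))) > 0} \<le> 1"
      by (simp add: measure_pmf.prob_le_1)
  qed
qed

lemma prob_inter_ge:
  "measure_pmf.prob P (A \<inter> B) \<ge> measure_pmf.prob P A + measure_pmf.prob P B - 1"
proof -
  have "measure_pmf.prob P (A \<union> B) = measure_pmf.prob P A + measure_pmf.prob P B - measure_pmf.prob P (A \<inter> B)"
  proof -
    have "measure_pmf.prob P (A \<union> B) = measure_pmf.prob P A + measure_pmf.prob P (B - A)"
      by (rule measure_pmf.finite_measure_Union') simp_all
    moreover have "measure_pmf.prob P (B - A) = measure_pmf.prob P B - measure_pmf.prob P (B \<inter> A)"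
      by (rule measure_pmf.finite_measure_Diff') simp_all
    ultimately show ?thesis by (simp add: Int_commute)
  qed
  moreover have "measure_pmf.prob P (A \<union> B) \<le> 1" by (rule measure_pmf.prob_le_1)
  ultimately show ?thesis by linarith
qed

lemma abstract_main:
  fixes Q :: "nat \<Rightarrow> 'g pmf" and \<psi> :: "nat \<Rightarrow> 'g \<Rightarrow> nat" and \<mu> h0 :: real
  assumes h0: "h0 > 0" and \<mu>h0: "\<mu> \<ge> h0"
    and conv: "\<And>k. (\<lambda>n. measure_pmf.prob (Q n) {x. \<psi> n x = k}) \<longlonglongrightarrow> poi \<mu> k"
  shows "\<forall>\<epsilon>>0. (\<lambda>n. measure_pmf.prob (Pi_pmf {..<n} d (\<lambda>_. Q n))
            {\<omega>. let F = (\<lambda>l. \<Sum>i<n. (real (\<psi> n (\<omega> i)) - h0) * exp (- l * (real (\<psi> n (\<omega> i)) - h0)))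
                in (\<exists>!l. F l = 0) \<and> \<bar>(THE l. F l = 0) - ln (\<mu> / h0)\<bar> < \<epsilon>}) \<longlonglongrightarrow> 1"
proof (intro allI impI)
  fix \<epsilon> :: real assume \<epsilon>: "\<epsilon> > 0"
  have \<mu>: "\<mu> > 0" using h0 \<mu>h0 by simp
  define l0 where "l0 = ln (\<mu> / h0)"
  have l0: "l0 \<ge> 0" using \<mu>h0 h0 by (simp add: l0_def)
  have el0: "exp (- l0) = h0 / \<mu>" using \<mu> h0 by (simp add: l0_def exp_minus)
  define l1 where "l1 = l0 - \<epsilon> / 2"
  define l2 where "l2 = l0 + \<epsilon> / 2"
  have l2: "l2 > 0" using l0 \<epsilon> by (simp add: l2_def)
  have s2: "\<mu> * exp (- l2) < h0"
  proof -
    have "exp (- l2) < exp (- l0)" using \<epsilon> by (simp add: l2_def)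
    then have "\<mu> * exp (- l2) < \<mu> * exp (- l0)" using \<mu> by simp
    then show ?thesis using el0 \<mu> by simp
  qed
  have s1: "\<mu> * exp (- l1) > h0"
  proof -
    have "exp (- l1) > exp (- l0)" using \<epsilon> by (simp add: l1_def)
    then have "\<mu> * exp (- l1) > \<mu> * exp (- l0)" using \<mu> by simp
    then show ?thesis using el0 \<mu> by simp
  qed
  define P where "P = (\<lambda>n. Pi_pmf {..<n} d (\<lambda>_. Q n))"
  define A where "A = (\<lambda>n. {\<omega>. (\<Sum>i<n. gfun h0 l1 (\<psi> n (\<omega> i))) > 0})"
  define B where "B = (\<lambda>n. {\<omega>. (\<Sum>i<n. gfun h0 l2 (\<psi> n (\<omega> i))) < 0})"
  define E where "E = (\<lambda>n. {\<omega>. let F = (\<lambda>l. \<Sum>i<n. (real (\<psi> n (\<omega> i)) - h0) * exp (- l * (real (\<psi> n (\<omega> i)) - h0)))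
                in (\<exists>!l. F l = 0) \<and> \<bar>(THE l. F l = 0) - ln (\<mu> / h0)\<bar> < \<epsilon>})"
  have limA: "(\<lambda>n. measure_pmf.prob (P n) (A n)) \<longlonglongrightarrow> 1"
    unfolding P_def A_def by (rule part_b[OF h0 \<mu> s1 conv])
  have limB: "(\<lambda>n. measure_pmf.prob (P n) (B n)) \<longlonglongrightarrow> 1"
    unfolding P_def B_def by (rule part_a[OF h0 \<mu> l2 s2 conv])
  have sub: "A n \<inter> B n \<subseteq> E n" for n
  proof
    fix \<omega> assume w: "\<omega> \<in> A n \<inter> B n"
    define h where "h = (\<lambda>i. real (\<psi> n (\<omega> i)) - h0)"
    define F where "F = (\<lambda>l. \<Sum>i\<in>{..<n}. h i * exp (- l * h i))"
    have Fl: "F l = (\<Sum>i<n. gfun h0 l (\<psi> n (\<omega> i)))" for l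
      unfolding F_def h_def gfun_def by simp
    have r: "(\<exists>!l. F l = 0) \<and> l1 < (THE l. F l = 0) \<and> (THE l. F l = 0) < l2"
      unfolding F_def
    proof (rule root_unique)
      show "l1 < l2" using \<epsilon> by (simp add: l1_def l2_def)
      show "(\<Sum>i\<in>{..<n}. h i * exp (- l1 * h i)) > 0" using w Fl[of l1] unfolding F_def A_def by simp
      show "(\<Sum>i\<in>{..<n}. h i * exp (- l2 * h i)) < 0" using w Fl[of l2] unfolding F_def B_def by simp
    qed simp
    then have "\<bar>(THE l. F l = 0) - ln (\<mu> / h0)\<bar> < \<epsilon>"
      using \<epsilon> unfolding l1_def l2_def l0_def by (simp add: abs_less_iff)
    then show "\<omega> \<in> E n" using r unfolding E_def F_def h_def Let_def by simp
  qed
  have lo: "(\<lambda>n. measure_pmf.prob (P n) (A n) + measure_pmf.prob (P n) (B n) - 1) \<longlonglongrightarrow> 1"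
    using tendsto_diff[OF tendsto_add[OF limA limB] tendsto_const[of 1]] by simp
  have "(\<lambda>n. measure_pmf.prob (P n) (E n)) \<longlonglongrightarrow> 1"
  proof (rule tendsto_sandwich[OF _ _ lo tendsto_const])
    show "\<forall>\<^sub>F n in sequentially. measure_pmf.prob (P n) (A n) + measure_pmf.prob (P n) (B n) - 1 \<le> measure_pmf.prob (P n) (E n)"
    proof (intro always_eventually allI)
      fix n
      have "measure_pmf.prob (P n) (A n) + measure_pmf.prob (P n) (B n) - 1 \<le> measure_pmf.prob (P n) (A n \<inter> B n)"
        by (rule prob_inter_ge)
      also have "\<dots> \<le> measure_pmf.prob (P n) (E n)"
        by (rule measure_pmf.finite_measure_mono[OF sub]) simp
      finally show "measure_pmf.prob (P n) (A n) + measure_pmf.prob (P n) (B n) - 1 \<le> measure_pmf.prob (P n) (E n)" .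
    qed
    show "\<forall>\<^sub>F n in sequentially. measure_pmf.prob (P n) (E n) \<le> 1"
      by (simp add: measure_pmf.prob_le_1)
  qed
  then show "(\<lambda>n. measure_pmf.prob (Pi_pmf {..<n} d (\<lambda>_. Q n))
            {\<omega>. let F = (\<lambda>l. \<Sum>i<n. (real (\<psi> n (\<omega> i)) - h0) * exp (- l * (real (\<psi> n (\<omega> i)) - h0)))
                in (\<exists>!l. F l = 0) \<and> \<bar>(THE l. F l = 0) - ln (\<mu> / h0)\<bar> < \<epsilon>}) \<longlonglongrightarrow> 1"
    unfolding P_def E_def .
qed


lemma alt_choose_partial:
  assumes "M \<ge> 1"
  shows "(\<Sum>i\<le>s. (-1::real) ^ i * real (M choose i)) = (-1) ^ s * real ((M - 1) choose s)"
proof (induction s)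
  case 0
  then show ?case by simp
next
  case (Suc s)
  have pas: "real (M choose Suc s) = real ((M - 1) choose s) + real ((M - 1) choose Suc s)"
  proof -
    obtain M' where M': "M = Suc M'" using assms by (cases M) auto
    show ?thesis unfolding M' by simp
  qed
  show ?case using Suc by (simp add: pas algebra_simps)
qed

lemma bonf_identity:
  fixes N k s :: nat
  defines "S \<equiv> (\<Sum>i\<le>s. (-1::real) ^ i * real ((k + i) choose k) * real (N choose (k + i)))"
  shows "(-1) ^ s * (S - (if N = k then 1 else 0)) \<ge> 0"
proof -
  have eq: "real ((k + i) choose k) * real (N choose (k + i)) = real (N choose k) * real ((N - k) choose i)" for i
  proof (cases "k + i \<le> N")
    case True
    have "(N choose (k + i)) * ((k + i) choose k) = (N choose k) * ((N - k) choose (k + i - k))"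
      by (rule choose_mult) (use True in auto)
    then show ?thesis by (simp add: mult.commute flip: of_nat_mult)
  next
    case False
    then have "N choose (k + i) = 0" by simp
    moreover have "(N choose k) * ((N - k) choose i) = 0"
      using False by (cases "k \<le> N") auto
    ultimately show ?thesis by (metis of_nat_0 of_nat_mult mult_zero_right)
  qed
  have S: "S = real (N choose k) * (\<Sum>i\<le>s. (-1::real) ^ i * real ((N - k) choose i))"
    unfolding S_def by (simp add: sum_distrib_left mult.assoc eq mult.left_commute)
  consider "N < k" | "N = k" | "N > k" by linarith
  then show ?thesis
  proof cases
    case 1
    then have "N choose k = 0" by simp
    then show ?thesis by (simp only: S) simp
  next
    case 2
    have "(\<Sum>i\<le>s. (-1::real) ^ i * real (0 choose i)) = 1"
      by (induction s) auto
    then show ?thesis using 2 by (simp add: S)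
  next
    case 3
    have "S = real (N choose k) * ((-1) ^ s * real ((N - k - 1) choose s))"
      unfolding S using 3 by (subst alt_choose_partial) auto
    then have "(-1) ^ s * (S - (if N = k then 1 else 0)) = real (N choose k) * real ((N - k - 1) choose s)"
      using 3 by (simp add: algebra_simps flip: power_add)
    then show ?thesis by simp
  qed
qed

lemma T_closed:
  "(\<Sum>i\<le>s. (-1::real) ^ i * real ((k + i) choose k) * (\<mu> ^ (k + i) / fact (k + i))) =
   \<mu> ^ k / fact k * (\<Sum>i\<le>s. (- \<mu>) ^ i / fact i)"
proof -
  have "(-1::real) ^ i * real ((k + i) choose k) * (\<mu> ^ (k + i) / fact (k + i)) =
        \<mu> ^ k / fact k * ((- \<mu>) ^ i / fact i)" for i
  proof -
    have "real ((k + i) choose k) = fact (k + i) / (fact k * fact i)"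
      by (subst binomial_fact) auto
    moreover have "(fact (k + i) :: real) \<noteq> 0" by simp
    moreover have "(- \<mu>) ^ i = (-1::real) ^ i * \<mu> ^ i" by (rule power_minus)
    ultimately show ?thesis
      by (simp only: power_add) (simp add: divide_simps)
  qed
  then show ?thesis by (simp add: sum_distrib_left)
qed

lemma T_lim: "(\<lambda>s. \<mu> ^ k / fact k * (\<Sum>i\<le>s. (- \<mu>) ^ i / fact i)) \<longlonglongrightarrow> poi \<mu> k"
proof -
  have "(\<lambda>s. \<Sum>i<s. (- \<mu>) ^ i / fact i) \<longlonglongrightarrow> exp (- \<mu>)"
    using exp_series_sums[of "-\<mu>"] unfolding sums_def .
  then have "(\<lambda>s. \<Sum>i<Suc s. (- \<mu>) ^ i / fact i) \<longlonglongrightarrow> exp (- \<mu>)"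
    by (rule LIMSEQ_Suc)
  then have "(\<lambda>s. \<Sum>i\<le>s. (- \<mu>) ^ i / fact i) \<longlonglongrightarrow> exp (- \<mu>)"
    by (simp add: lessThan_Suc_atMost)
  then show ?thesis unfolding poi_def by (intro tendsto_mult_left) 
qed

lemma moments_to_poisson:
  fixes Q :: "nat \<Rightarrow> 'g pmf" and \<psi> :: "nat \<Rightarrow> 'g \<Rightarrow> nat"
  assumes fin: "\<And>n. finite (set_pmf (Q n))"
    and mom: "\<And>j. (\<lambda>n. measure_pmf.expectation (Q n) (\<lambda>x. real (\<psi> n x choose j))) \<longlonglongrightarrow> \<mu> ^ j / fact j"
  shows "(\<lambda>n. measure_pmf.prob (Q n) {x. \<psi> n x = k}) \<longlonglongrightarrow> poi \<mu> k"
proof -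
  define p where "p = (\<lambda>n. measure_pmf.prob (Q n) {x. \<psi> n x = k})"
  define ES where "ES = (\<lambda>n s. \<Sum>i\<le>s. (-1::real) ^ i * real ((k + i) choose k) *
       measure_pmf.expectation (Q n) (\<lambda>x. real (\<psi> n x choose (k + i))))"
  define T where "T = (\<lambda>s. \<mu> ^ k / fact k * (\<Sum>i\<le>s. (- \<mu>) ^ i / fact i))"
  have ES_lim: "(\<lambda>n. ES n s) \<longlonglongrightarrow> T s" for s
  proof -
    have "(\<lambda>n. ES n s) \<longlonglongrightarrow> (\<Sum>i\<le>s. (-1::real) ^ i * real ((k + i) choose k) * (\<mu> ^ (k + i) / fact (k + i)))"
      unfolding ES_def by (intro tendsto_sum tendsto_mult_left mom)
    then show ?thesis unfolding T_def T_closed .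
  qed
  have ineq: "(-1) ^ s * (ES n s - p n) \<ge> 0" for n s
  proof -
    have int: "integrable (measure_pmf (Q n)) f" for f :: "'g \<Rightarrow> real"
      by (rule integrable_measure_pmf_finite[OF fin])
    define S where "S = (\<lambda>x. \<Sum>i\<le>s. (-1::real) ^ i * real ((k + i) choose k) * real (\<psi> n x choose (k + i)))"
    have "measure_pmf.expectation (Q n) S = ES n s"
      unfolding S_def ES_def
      by (subst Bochner_Integration.integral_sum) (auto intro: int)
    moreover have "measure_pmf.expectation (Q n) (\<lambda>x. indicator {x. \<psi> n x = k} x :: real) = p n"
      unfolding p_def by simp
    moreover have "measure_pmf.expectation (Q n) (\<lambda>x. (-1) ^ s * (S x - indicator {x. \<psi> n x = k} x)) \<ge> 0"
    proof (rule Bochner_Integration.integral_nonneg)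
      fix x
      show "0 \<le> (-1::real) ^ s * (S x - indicator {x. \<psi> n x = k} x)"
      proof -
        have "indicator {x. \<psi> n x = k} x = (if \<psi> n x = k then 1 else (0::real))"
          by (simp add: indicator_def)
        then show ?thesis using bonf_identity[of s k "\<psi> n x"] unfolding S_def by (simp only:)
      qed
    qed
    moreover have "measure_pmf.expectation (Q n) (\<lambda>x. (-1) ^ s * (S x - indicator {x. \<psi> n x = k} x)) =
        (-1) ^ s * (measure_pmf.expectation (Q n) S - measure_pmf.expectation (Q n) (\<lambda>x. indicator {x. \<psi> n x = k} x :: real))"
      by (simp add: int)
    ultimately show ?thesis by simp
  qed
  have even_le: "p n \<le> ES n s" if "even s" for n s
    using ineq[of s n] that by simp
  have odd_ge: "ES n s \<le> p n" if "odd s" for n s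
    using ineq[of s n] that by simp
  show ?thesis
    unfolding p_def[symmetric]
  proof (rule tendstoI)
    fix \<eta> :: real assume \<eta>: "\<eta> > 0"
    have "eventually (\<lambda>s. dist (T s) (poi \<mu> k) < \<eta> / 2) sequentially"
      using T_lim[of \<mu> k] \<eta> unfolding T_def by (intro tendstoD) auto
    then obtain s0 where s0: "\<And>s. s \<ge> s0 \<Longrightarrow> dist (T s) (poi \<mu> k) < \<eta> / 2"
      by (auto simp: eventually_sequentially)
    define s where "s = 2 * s0"
    have ev_s: "even s" and od_s: "odd (Suc s)" by (auto simp: s_def)
    have Ts: "T s < poi \<mu> k + \<eta> / 2" using s0[of s] unfolding dist_real_def s_def by linarith
    have Ts1: "T (Suc s) > poi \<mu> k - \<eta> / 2" using s0[of "Suc s"] unfolding dist_real_def s_def by linarith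
    have e1: "eventually (\<lambda>n. ES n s < poi \<mu> k + \<eta>) sequentially"
    proof -
      have "T s < poi \<mu> k + \<eta>" using Ts \<eta> by simp
      then show ?thesis using order_tendstoD(2)[OF ES_lim[of s]] by blast
    qed
    have e2: "eventually (\<lambda>n. ES n (Suc s) > poi \<mu> k - \<eta>) sequentially"
    proof -
      have "T (Suc s) > poi \<mu> k - \<eta>" using Ts1 \<eta> by simp
      then show ?thesis using order_tendstoD(1)[OF ES_lim[of "Suc s"]] by blast
    qed
    show "eventually (\<lambda>n. dist (p n) (poi \<mu> k) < \<eta>) sequentially"
      using e1 e2
    proof eventually_elim
      case (elim n)
      then show ?case using even_le[OF ev_s, of n] odd_ge[OF od_s, of n]
        by (simp add: dist_real_def abs_less_iff)
    qed
  qed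
qed


locale sbg =
  fixes v :: nat and EH :: "nat set set"
  assumes graph: "is_graph v EH" and EH_ne: "EH \<noteq> {}" and sb: "strictly_balanced v EH"
begin

lemma edge_props: "\<epsilon> \<in> EH \<Longrightarrow> \<exists>a b. a \<noteq> b \<and> a < v \<and> b < v \<and> \<epsilon> = {a, b}"
  using graph unfolding is_graph_def by blast

lemma edge_sub: "\<epsilon> \<in> EH \<Longrightarrow> \<epsilon> \<subseteq> {0..<v}"
  using edge_props by fastforce

lemma edge_ne: "\<epsilon> \<in> EH \<Longrightarrow> \<epsilon> \<noteq> {}"
  using edge_props by fastforce

lemma EH_sub: "EH \<subseteq> Pow {0..<v}"
  using edge_sub by blast

lemma finite_EH: "finite EH"
  using EH_sub finite_subset by blast

lemma v_ge2: "v \<ge> 2"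
proof -
  obtain \<epsilon> where "\<epsilon> \<in> EH" using EH_ne by blast
  then obtain a b where "a \<noteq> b" "a < v" "b < v" using edge_props by blast
  then show ?thesis by linarith
qed

lemma e_pos: "card EH > 0"
  using EH_ne finite_EH by (simp add: card_gt_0_iff)

lemma H_in_sub: "({0..<v}, EH) \<in> subgraphs v EH"
  unfolding subgraphs_def using edge_sub by auto

lemma sub_finite: "(W, D) \<in> subgraphs v EH \<Longrightarrow> finite W \<and> finite D"
  unfolding subgraphs_def using finite_EH by (auto intro: finite_subset)

lemma subgraphs_finite: "finite (subgraphs v EH)"
proof -
  have "subgraphs v EH \<subseteq> Pow {0..<v} \<times> Pow EH" unfolding subgraphs_def by auto
  moreover have "finite (Pow {0..<v} \<times> Pow EH)" using finite_EH by simp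
  ultimately show ?thesis by (rule finite_subset)
qed

lemma sub_strict:
  assumes "(W, D) \<in> subgraphs v EH" "W \<noteq> {}" "(W, D) \<noteq> ({0..<v}, EH)"
  shows "real (card D) * real v < real (card EH) * real (card W)"
proof -
  have fin: "finite W" "finite D" using sub_finite[OF assms(1)] by auto
  have cW: "card W > 0" using fin assms(2) by (simp add: card_gt_0_iff)
  show ?thesis
  proof (cases "D = {}")
    case True
    then show ?thesis using cW e_pos by simp
  next
    case False
    then have "real (card D) / real (card W) < real (card EH) / real v"
      using sb assms unfolding strictly_balanced_def by blast
    moreover have "real v > 0" using v_ge2 by simp
    ultimately show ?thesis using cW by (simp add: field_simps)
  qed
qed

lemma sub_le:
  assumes "(W, D) \<in> subgraphs v EH"
  shows "real (card D) * real v \<le> real (card EH) * real (card W)"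
proof (cases "W = {}")
  case True
  then have "D = {}" using assms edge_ne unfolding subgraphs_def by fastforce
  then show ?thesis by simp
next
  case False
  show ?thesis
  proof (cases "(W, D) = ({0..<v}, EH)")
    case True
    then show ?thesis by (simp add: mult.commute)
  qed (use sub_strict[OF assms False] in auto)
qed

lemma no_isolated:
  assumes "a < v"
  shows "\<exists>\<epsilon>\<in>EH. a \<in> \<epsilon>"
proof (rule ccontr)
  assume na: "\<not> ?thesis"
  have "({0..<v} - {a}, EH) \<in> subgraphs v EH"
  proof -
    have "\<forall>\<epsilon>\<in>EH. \<epsilon> \<subseteq> {0..<v} - {a}" using edge_sub na by blast
    then show ?thesis unfolding subgraphs_def by auto
  qed
  moreover have "({0..<v} - {a}, EH) \<noteq> ({0..<v}, EH)"
  proof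
    assume "({0..<v} - {a}, EH) = ({0..<v}, EH)"
    then have "{0..<v} - {a} = {0..<v}" by simp
    moreover have "a \<in> {0..<v}" using assms by simp
    ultimately show False by blast
  qed
  moreover have "{0..<v} - {a} \<noteq> {}"
  proof -
    have "(if a = 0 then 1 else 0) \<in> {0..<v} - {a}" using v_ge2 assms by auto
    then show ?thesis by blast
  qed
  ultimately have lt: "real (card EH) * real v < real (card EH) * real (card ({0..<v} - {a}))"
    using sub_strict by blast
  have "card ({0..<v} - {a}) = v - 1" using assms by simp
  then have "real (card EH) * real v < real (card EH) * real (v - 1)" using lt by simp
  moreover have "real (card EH) * real (v - 1) \<le> real (card EH) * real v"
    by (intro mult_left_mono) auto
  ultimately show False by linarith
qed

lemma max_density_eq: "max_density v EH = real (card EH) / real v"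
proof -
  define S where "S = {real (card E) / real (card V) | V E. (V, E) \<in> subgraphs v EH \<and> E \<noteq> {}}"
  have fin: "finite S"
  proof -
    have "S = (\<lambda>(V, E). real (card E) / real (card V)) ` {(V, E) \<in> subgraphs v EH. E \<noteq> {}}"
      unfolding S_def by auto
    moreover have "finite {(V, E). (V, E) \<in> subgraphs v EH \<and> E \<noteq> {}}"
      using subgraphs_finite by (rule finite_subset[rotated]) auto
    ultimately show ?thesis by simp
  qed
  have mem: "real (card EH) / real v \<in> S"
    unfolding S_def using H_in_sub EH_ne by force
  have le: "x \<le> real (card EH) / real v" if xS: "x \<in> S" for x
  proof -
    obtain W D where x: "x = real (card D) / real (card W)" "(W, D) \<in> subgraphs v EH" "D \<noteq> {}"
      using xS unfolding S_def by blast
    have "W \<noteq> {}" using x(2,3) edge_ne unfolding subgraphs_def by fastforce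
    then have "card W > 0" using sub_finite[OF x(2)] by (simp add: card_gt_0_iff)
    moreover have "real v > 0" using v_ge2 by simp
    ultimately show ?thesis using sub_le[OF x(2)] unfolding x(1) by (simp add: field_simps)
  qed
  have "Max S = real (card EH) / real v"
    by (rule Max_eqI[OF fin le mem])
  then show ?thesis unfolding max_density_def S_def .
qed


definition Inj :: "nat \<Rightarrow> (nat \<Rightarrow> nat) set" where
  "Inj m = {f \<in> {0..<v} \<rightarrow>\<^sub>E {0..<m}. inj_on f {0..<v}}"

definition img :: "(nat \<Rightarrow> nat) \<Rightarrow> nat set set" where
  "img f = (\<lambda>\<epsilon>. f ` \<epsilon>) ` EH"

definition copyset :: "nat \<Rightarrow> nat set set \<Rightarrow> nat set set set" where
  "copyset m G = img ` inj_hom v EH m G"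

lemma finite_Inj: "finite (Inj m)"
proof -
  have "Inj m \<subseteq> {0..<v} \<rightarrow>\<^sub>E {0..<m}" unfolding Inj_def by auto
  then show ?thesis by (rule finite_subset) (simp add: finite_PiE)
qed

lemma inj_hom_eq: "inj_hom v EH m G = {f \<in> Inj m. img f \<subseteq> G}"
  unfolding inj_hom_def Inj_def img_def by auto

lemma img_inj: "f \<in> Inj m \<Longrightarrow> inj_on (\<lambda>\<epsilon>. f ` \<epsilon>) EH"
proof (rule inj_onI)
  fix a b assume f: "f \<in> Inj m" and ab: "a \<in> EH" "b \<in> EH" "f ` a = f ` b"
  have "inj_on f {0..<v}" using f unfolding Inj_def by auto
  then show "a = b" using ab edge_sub[OF ab(1)] edge_sub[OF ab(2)] inj_on_image_eq_iff by metis
qed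

lemma img_card: "f \<in> Inj m \<Longrightarrow> card (img f) = card EH"
  unfolding img_def using img_inj by (simp add: card_image)

lemma finite_img: "finite (img f)"
  unfolding img_def using finite_EH by simp

lemma union_img: "\<Union>(img f) = f ` {0..<v}"
proof
  show "\<Union>(img f) \<subseteq> f ` {0..<v}" unfolding img_def using edge_sub by auto
  show "f ` {0..<v} \<subseteq> \<Union>(img f)"
  proof
    fix y assume "y \<in> f ` {0..<v}"
    then obtain a where a: "a < v" "y = f a" by auto
    obtain \<epsilon> where "\<epsilon> \<in> EH" "a \<in> \<epsilon>" using no_isolated[OF a(1)] by blast
    then show "y \<in> \<Union>(img f)" unfolding img_def using a by auto
  qed
qed

lemma Aut_finite: "finite (Aut v EH)"
proof -
  have "Aut v EH \<subseteq> {0..<v} \<rightarrow>\<^sub>E {0..<v}" unfolding Aut_def by auto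
  then show ?thesis by (rule finite_subset) (simp add: finite_PiE)
qed

lemma Aut_pos: "card (Aut v EH) > 0"
proof -
  have id_edges: "restrict id {0..<v} ` \<epsilon> = \<epsilon>" if "\<epsilon> \<in> EH" for \<epsilon>
    using edge_sub[OF that] by auto
  have a: "(\<lambda>\<epsilon>. restrict id {0..<v} ` \<epsilon>) ` EH = EH"
    using id_edges by simp
  have b: "bij_betw (restrict id {0..<v}) {0..<v} {0..<v}"
    by (simp add: bij_betw_def inj_on_def)
  have "restrict id {0..<v} \<in> Aut v EH"
    unfolding Aut_def using a b by auto
  then have "Aut v EH \<noteq> {}" by blast
  then show ?thesis using Aut_finite by (simp add: card_gt_0_iff)
qed

lemma fiber_card:
  assumes f0: "f0 \<in> Inj m"
  shows "card {f \<in> Inj m. img f = img f0} = card (Aut v EH)"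
proof -
  define V where "V = {0..<v}"
  define \<Phi> where "\<Phi> = (\<lambda>\<sigma>. restrict (f0 \<circ> \<sigma>) V)"
  have f0V: "f0 \<in> V \<rightarrow>\<^sub>E {0..<m}" "inj_on f0 V" using f0 unfolding Inj_def V_def by auto
  have "bij_betw \<Phi> (Aut v EH) {f \<in> Inj m. img f = img f0}"
  proof (rule bij_betw_imageI)
    show "inj_on \<Phi> (Aut v EH)"
    proof (rule inj_onI)
      fix \<sigma>1 \<sigma>2 assume s: "\<sigma>1 \<in> Aut v EH" "\<sigma>2 \<in> Aut v EH" and eq: "\<Phi> \<sigma>1 = \<Phi> \<sigma>2"
      have s1: "\<sigma>1 \<in> V \<rightarrow>\<^sub>E V" and s2: "\<sigma>2 \<in> V \<rightarrow>\<^sub>E V" using s unfolding Aut_def V_def by auto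
      show "\<sigma>1 = \<sigma>2"
      proof (rule extensionalityI[OF PiE_E[OF s1] PiE_E[OF s2]])
        fix a assume a: "a \<in> V"
        have "f0 (\<sigma>1 a) = f0 (\<sigma>2 a)" using fun_cong[OF eq, of a] a unfolding \<Phi>_def by simp
        moreover have "\<sigma>1 a \<in> V" "\<sigma>2 a \<in> V" using s1 s2 a by auto
        ultimately show "\<sigma>1 a = \<sigma>2 a" using f0V(2) by (meson inj_onD)
      qed (use s1 s2 in \<open>auto simp: PiE_def\<close>)
    qed
  next
    show "\<Phi> ` Aut v EH = {f \<in> Inj m. img f = img f0}"
    proof (intro equalityI subsetI)
      fix f assume "f \<in> \<Phi> ` Aut v EH"
      then obtain \<sigma> where s: "\<sigma> \<in> Aut v EH" and f: "f = \<Phi> \<sigma>" by auto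
      have sV: "\<sigma> \<in> V \<rightarrow>\<^sub>E V" "bij_betw \<sigma> V V" "(\<lambda>e. \<sigma> ` e) ` EH = EH"
        using s unfolding Aut_def V_def by auto
      have "f \<in> V \<rightarrow>\<^sub>E {0..<m}" unfolding f \<Phi>_def using sV(1) f0V(1) by auto
      moreover have "inj_on f V"
      proof -
        have "inj_on (f0 \<circ> \<sigma>) V"
          using sV(2) f0V(2) by (simp add: bij_betw_def comp_inj_on)
        then show ?thesis unfolding f \<Phi>_def by (simp add: inj_on_def)
      qed
      moreover have "img f = img f0"
      proof -
        have "f ` \<epsilon> = f0 ` (\<sigma> ` \<epsilon>)" if "\<epsilon> \<in> EH" for \<epsilon>
          using edge_sub[OF that] unfolding f \<Phi>_def V_def by auto
        then have "img f = (\<lambda>\<epsilon>. f0 ` \<epsilon>) ` ((\<lambda>e. \<sigma> ` e) ` EH)"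
          unfolding img_def by (auto simp: image_image)
        then show ?thesis using sV(3) unfolding img_def by simp
      qed
      ultimately show "f \<in> {f \<in> Inj m. img f = img f0}" unfolding Inj_def V_def by auto
    next
      fix f assume "f \<in> {f \<in> Inj m. img f = img f0}"
      then have fI: "f \<in> Inj m" and fimg: "img f = img f0" by auto
      have fV: "f \<in> V \<rightarrow>\<^sub>E {0..<m}" "inj_on f V" using fI unfolding Inj_def V_def by auto
      have imV: "f ` V = f0 ` V" using union_img[of f] union_img[of f0] fimg unfolding V_def by simp
      define \<sigma> where "\<sigma> = restrict (\<lambda>a. inv_into V f0 (f a)) V"
      have \<sigma>V: "\<sigma> ` V \<subseteq> V"
      proof
        fix y assume "y \<in> \<sigma> ` V"
        then obtain a where a: "a \<in> V" "y = \<sigma> a" by auto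
        have "f a \<in> f0 ` V" using imV a by auto
        then show "y \<in> V" using a unfolding \<sigma>_def by (simp add: inv_into_into)
      qed
      have \<sigma>inj: "inj_on \<sigma> V"
      proof (rule inj_onI)
        fix a b assume ab: "a \<in> V" "b \<in> V" "\<sigma> a = \<sigma> b"
        have fa: "f a \<in> f0 ` V" "f b \<in> f0 ` V" using imV ab by auto
        have "inv_into V f0 (f a) = inv_into V f0 (f b)" using ab unfolding \<sigma>_def by simp
        then have "f a = f b" using fa by (metis f_inv_into_f)
        then show "a = b" using fV(2) ab by (meson inj_onD)
      qed
      have \<sigma>bij: "bij_betw \<sigma> V V"
        unfolding bij_betw_def using \<sigma>inj \<sigma>V endo_inj_surj[of V \<sigma>] by (simp add: V_def)
      have \<sigma>E: "\<sigma> ` \<epsilon> \<in> EH" if e: "\<epsilon> \<in> EH" for \<epsilon>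
      proof -
        have "f ` \<epsilon> \<in> img f0" using fimg e unfolding img_def by auto
        then obtain \<epsilon>' where e': "\<epsilon>' \<in> EH" "f ` \<epsilon> = f0 ` \<epsilon>'" unfolding img_def by auto
        have "\<sigma> ` \<epsilon> = inv_into V f0 ` f ` \<epsilon>"
          using edge_sub[OF e] unfolding \<sigma>_def V_def by (auto simp: image_image)
        also have "\<dots> = \<epsilon>'" unfolding e'(2)
          by (rule inv_into_image_cancel[OF f0V(2)]) (use edge_sub[OF e'(1)] in \<open>simp add: V_def\<close>)
        finally show ?thesis using e' by simp
      qed
      have \<sigma>EH: "(\<lambda>e. \<sigma> ` e) ` EH = EH"
      proof (rule endo_inj_surj[OF finite_EH])
        show "(\<lambda>e. \<sigma> ` e) ` EH \<subseteq> EH" using \<sigma>E by auto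
        show "inj_on (\<lambda>e. \<sigma> ` e) EH"
        proof (rule inj_onI)
          fix a b assume ab: "a \<in> EH" "b \<in> EH" "\<sigma> ` a = \<sigma> ` b"
          then show "a = b" using \<sigma>inj edge_sub[OF ab(1)] edge_sub[OF ab(2)] inj_on_image_eq_iff
            unfolding V_def by metis
        qed
      qed
      have \<sigma>A: "\<sigma> \<in> Aut v EH"
        unfolding Aut_def using \<sigma>V \<sigma>bij \<sigma>EH unfolding \<sigma>_def V_def by auto
      have "f = \<Phi> \<sigma>"
      proof (rule extensionalityI[OF PiE_E[OF fV(1)]])
        show "\<Phi> \<sigma> \<in> extensional V" unfolding \<Phi>_def by simp
        fix a assume a: "a \<in> V"
        have "f a \<in> f0 ` V" using imV a by auto
        then show "f a = \<Phi> \<sigma> a" unfolding \<Phi>_def \<sigma>_def using a by (simp add: f_inv_into_f)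
      qed (use fV in \<open>auto simp: PiE_def\<close>)
      then show "f \<in> \<Phi> ` Aut v EH" using \<sigma>A by blast
    qed
  qed
  then show ?thesis by (simp add: bij_betw_same_card)
qed

lemma card_inj_hom: "card (inj_hom v EH m G) = card (Aut v EH) * card (copyset m G)"
proof -
  have eq: "inj_hom v EH m G = (\<Union>S\<in>copyset m G. {f \<in> Inj m. img f = S})"
    unfolding inj_hom_eq copyset_def by auto
  have "card (\<Union>S\<in>copyset m G. {f \<in> Inj m. img f = S}) = (\<Sum>S\<in>copyset m G. card {f \<in> Inj m. img f = S})"
  proof (rule card_UN_disjoint)
    show "finite (copyset m G)" unfolding copyset_def inj_hom_eq using finite_Inj by simp
  qed (use finite_Inj in auto)
  also have "\<dots> = (\<Sum>S\<in>copyset m G. card (Aut v EH))"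
  proof (rule sum.cong[OF refl])
    fix S assume "S \<in> copyset m G"
    then obtain f0 where "f0 \<in> Inj m" "S = img f0" unfolding copyset_def inj_hom_eq by auto
    then show "card {f \<in> Inj m. img f = S} = card (Aut v EH)" using fiber_card by simp
  qed
  finally show ?thesis using eq by simp
qed

lemma copies_eq: "copies v EH m G = real (card (copyset m G))"
proof -
  have "real (card (Aut v EH)) > 0" using Aut_pos by simp
  then show ?thesis unfolding copies_def card_inj_hom of_nat_mult by simp
qed

end


lemma distinct_lists_card:
  assumes fin: "finite B"
  shows "card {xs. length xs = j \<and> distinct xs \<and> set xs \<subseteq> B} = (card B choose j) * fact j"
proof (cases "j \<le> card B")
  case True
  have "card {xs. length xs = j \<and> distinct xs \<and> set xs \<subseteq> B} = \<Prod>{card B - j + 1 .. card B}"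
    by (rule card_lists_distinct_length_eq[OF fin True])
  also have "\<dots> = fact (card B) div fact (card B - j)"
    using fact_div_fact[of "card B - j" "card B"] True by simp
  also have "\<dots> = (card B choose j) * fact j"
  proof -
    have "fact j * fact (card B - j) * (card B choose j) = fact (card B)"
      by (rule binomial_fact_lemma[OF True])
    then show ?thesis by (metis fact_nonzero mult.commute mult.left_commute nonzero_mult_div_cancel_left)
  qed
  finally show ?thesis .
next
  case False
  have "{xs. length xs = j \<and> distinct xs \<and> set xs \<subseteq> B} = {}"
  proof (rule ccontr)
    assume "\<not> ?thesis"
    then obtain xs where xs: "length xs = j" "distinct xs" "set xs \<subseteq> B" by blast
    then have "card (set xs) = j" by (simp add: distinct_card)
    moreover have "card (set xs) \<le> card B" using xs(3) fin by (rule card_mono[rotated])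
    ultimately show False using False by simp
  qed
  moreover have "card B choose j = 0" using False by simp
  ultimately show ?thesis by (simp only: card.empty mult_0)
qed

lemma lists_fiber_card1:
  fixes h :: "'a \<Rightarrow> 'b"
  assumes fin: "finite A" and fib: "\<And>y. y \<in> h ` A \<Longrightarrow> card {x\<in>A. h x = y} = c"
  shows "set xs \<subseteq> h ` A \<Longrightarrow> card {ts. set ts \<subseteq> A \<and> map h ts = xs} = c ^ length xs"
proof (induction xs)
  case Nil
  have "{ts. set ts \<subseteq> A \<and> map h ts = []} = {[]}" by auto
  then show ?case by simp
next
  case (Cons y xs)
  have eq: "{ts. set ts \<subseteq> A \<and> map h ts = y # xs} =
        (\<lambda>(x, ts). x # ts) ` ({x\<in>A. h x = y} \<times> {ts. set ts \<subseteq> A \<and> map h ts = xs})"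
  proof (intro equalityI subsetI)
    fix ts assume "ts \<in> {ts. set ts \<subseteq> A \<and> map h ts = y # xs}"
    then show "ts \<in> (\<lambda>(x, ts). x # ts) ` ({x\<in>A. h x = y} \<times> {ts. set ts \<subseteq> A \<and> map h ts = xs})"
      by (cases ts) auto
  qed auto
  have inj: "inj_on (\<lambda>(x, ts). x # ts) X" for X :: "('a \<times> 'a list) set"
    by (auto simp: inj_on_def)
  have "card {ts. set ts \<subseteq> A \<and> map h ts = y # xs} = card {x\<in>A. h x = y} * card {ts. set ts \<subseteq> A \<and> map h ts = xs}"
    unfolding eq by (subst card_image[OF inj]) (simp add: card_cartesian_product)
  then show ?case using Cons fib by simp
qed

lemma lists_fiber_card:
  fixes h :: "'a \<Rightarrow> 'b"
  assumes fin: "finite A" and fib: "\<And>y. y \<in> h ` A \<Longrightarrow> card {x\<in>A. h x = y} = c"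
  shows "card {ts. length ts = j \<and> set ts \<subseteq> A \<and> distinct (map h ts)} =
         c ^ j * card {xs. length xs = j \<and> distinct xs \<and> set xs \<subseteq> h ` A}"
proof -
  define R where "R = {xs. length xs = j \<and> distinct xs \<and> set xs \<subseteq> h ` A}"
  have finR: "finite R" unfolding R_def
    by (rule finite_subset[OF _ finite_lists_length_eq[of "h ` A" j]]) (use fin in auto)
  have eq: "{ts. length ts = j \<and> set ts \<subseteq> A \<and> distinct (map h ts)} = (\<Union>xs\<in>R. {ts. set ts \<subseteq> A \<and> map h ts = xs})"
  proof (intro equalityI subsetI)
    fix ts assume "ts \<in> {ts. length ts = j \<and> set ts \<subseteq> A \<and> distinct (map h ts)}"
    then have ts: "length ts = j" "set ts \<subseteq> A" "distinct (map h ts)" by auto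
    have "map h ts \<in> R" unfolding R_def using ts by auto
    moreover have "ts \<in> {ts'. set ts' \<subseteq> A \<and> map h ts' = map h ts}" using ts by simp
    ultimately show "ts \<in> (\<Union>xs\<in>R. {ts. set ts \<subseteq> A \<and> map h ts = xs})" by blast
  next
    fix ts assume "ts \<in> (\<Union>xs\<in>R. {ts. set ts \<subseteq> A \<and> map h ts = xs})"
    then obtain xs where "xs \<in> R" "set ts \<subseteq> A" "map h ts = xs" by blast
    then show "ts \<in> {ts. length ts = j \<and> set ts \<subseteq> A \<and> distinct (map h ts)}"
      unfolding R_def by (metis (mono_tags, lifting) length_map mem_Collect_eq)
  qed
  have finF: "finite {ts. set ts \<subseteq> A \<and> map h ts = xs}" for xs
    by (rule finite_subset[OF _ finite_lists_length_eq[OF fin, of "length xs"]]) auto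
  have "card (\<Union>xs\<in>R. {ts. set ts \<subseteq> A \<and> map h ts = xs}) = (\<Sum>xs\<in>R. card {ts. set ts \<subseteq> A \<and> map h ts = xs})"
    by (rule card_UN_disjoint[OF finR]) (use finF in auto)
  also have "\<dots> = (\<Sum>xs\<in>R. c ^ j)"
    by (intro sum.cong refl) (auto simp: R_def intro!: lists_fiber_card1[OF fin fib])
  finally show ?thesis unfolding eq R_def by simp
qed

lemma finite_all_edges: "finite (all_edges m)"
proof -
  have "all_edges m \<subseteq> Pow {0..<m}" unfolding all_edges_def by auto
  then show ?thesis by (rule finite_subset) simp
qed

lemma gnp_set: "set_pmf (gnp m p) \<subseteq> Pow (all_edges m)"
  unfolding gnp_def by auto

lemma gnp_finite: "finite (set_pmf (gnp m p))"
  using gnp_set finite_all_edges by (meson finite_Pow_iff finite_subset)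

lemma gnp_prob_sub:
  assumes S: "S \<subseteq> all_edges m" and p: "0 \<le> p" "p \<le> 1"
  shows "measure_pmf.prob (gnp m p) {G. S \<subseteq> G} = p ^ card S"
proof -
  define B where "B = (\<lambda>e. if e \<in> S then {True} else (UNIV :: bool set))"
  have pre: "(\<lambda>f. {e \<in> all_edges m. f e}) -` {G. S \<subseteq> G} = Pi (all_edges m) B"
    using S unfolding B_def Pi_def by auto
  have "measure_pmf.prob (gnp m p) {G. S \<subseteq> G} =
        measure_pmf.prob (Pi_pmf (all_edges m) False (\<lambda>_. bernoulli_pmf p)) (Pi (all_edges m) B)"
    unfolding gnp_def measure_map_pmf pre ..
  also have "\<dots> = (\<Prod>x\<in>all_edges m. measure_pmf.prob (bernoulli_pmf p) (B x))"
    by (rule measure_Pi_pmf_Pi[OF finite_all_edges])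
  also have "\<dots> = (\<Prod>x\<in>all_edges m. if x \<in> S then p else 1)"
    by (intro prod.cong refl) (use p in \<open>auto simp: B_def measure_pmf_single\<close>)
  also have "\<dots> = p ^ card S"
    using S finite_all_edges by (simp add: prod.If_cases Int_absorb1)
  finally show ?thesis .
qed

context sbg
begin

definition Et :: "(nat \<Rightarrow> nat) list \<Rightarrow> nat set set" where
  "Et ts = \<Union>(img ` set ts)"

definition tup :: "nat \<Rightarrow> nat \<Rightarrow> (nat \<Rightarrow> nat) list set" where
  "tup m j = {ts. length ts = j \<and> set ts \<subseteq> Inj m \<and> distinct (map img ts)}"

lemma finite_tup: "finite (tup m j)"
  unfolding tup_def
  by (rule finite_subset[OF _ finite_lists_length_eq[OF finite_Inj, of m j]]) auto

lemma img_all_edges: "f \<in> Inj m \<Longrightarrow> img f \<subseteq> all_edges m"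
proof
  fix x assume f: "f \<in> Inj m" and x: "x \<in> img f"
  then obtain \<epsilon> where e: "\<epsilon> \<in> EH" "x = f ` \<epsilon>" unfolding img_def by auto
  obtain a b where ab: "a \<noteq> b" "a < v" "b < v" "\<epsilon> = {a, b}" using edge_props[OF e(1)] by blast
  have fI: "f \<in> {0..<v} \<rightarrow>\<^sub>E {0..<m}" "inj_on f {0..<v}" using f unfolding Inj_def by auto
  have fab: "f a \<noteq> f b" "f a < m" "f b < m"
  proof -
    show "f a < m" using PiE_mem[OF fI(1), of a] ab by simp
    show "f b < m" using PiE_mem[OF fI(1), of b] ab by simp
    show "f a \<noteq> f b" using inj_onD[OF fI(2), of a b] ab by auto
  qed
  show "x \<in> all_edges m" unfolding all_edges_def e(2) ab(4) using fab by auto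
qed

lemma Et_all_edges: "set ts \<subseteq> Inj m \<Longrightarrow> Et ts \<subseteq> all_edges m"
  unfolding Et_def using img_all_edges by blast

lemma count_identity:
  "(card (copyset m G) choose j) * fact j * card (Aut v EH) ^ j = card {ts \<in> tup m j. Et ts \<subseteq> G}"
proof -
  have eq: "{ts \<in> tup m j. Et ts \<subseteq> G} = {ts. length ts = j \<and> set ts \<subseteq> inj_hom v EH m G \<and> distinct (map img ts)}"
    unfolding tup_def Et_def inj_hom_eq by auto
  have finA: "finite (inj_hom v EH m G)" unfolding inj_hom_eq using finite_Inj by simp
  have fib: "card {x \<in> inj_hom v EH m G. img x = y} = card (Aut v EH)" if yA: "y \<in> img ` inj_hom v EH m G" for y
  proof -
    obtain f0 where f0: "f0 \<in> inj_hom v EH m G" "y = img f0" using yA by auto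
    have "{x \<in> inj_hom v EH m G. img x = y} = {f \<in> Inj m. img f = img f0}"
      using f0 unfolding inj_hom_eq by auto
    then show ?thesis using fiber_card f0 unfolding inj_hom_eq by simp
  qed
  have "card {ts \<in> tup m j. Et ts \<subseteq> G} = card (Aut v EH) ^ j * card {xs. length xs = j \<and> distinct xs \<and> set xs \<subseteq> copyset m G}"
    unfolding eq copyset_def by (rule lists_fiber_card[OF finA fib])
  also have "\<dots> = card (Aut v EH) ^ j * ((card (copyset m G) choose j) * fact j)"
  proof -
    have "finite (copyset m G)" unfolding copyset_def using finA by simp
    then show ?thesis by (simp add: distinct_lists_card)
  qed
  finally show ?thesis by (simp add: mult.commute)
qed

lemma expect_formula:
  assumes p: "0 \<le> p" "p \<le> 1"
  shows "measure_pmf.expectation (gnp m p) (\<lambda>G. real (card (copyset m G) choose j)) =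
         (\<Sum>ts\<in>tup m j. p ^ card (Et ts)) / (real (card (Aut v EH)) ^ j * fact j)"
proof -
  define a where "a = real (card (Aut v EH)) ^ j * fact j"
  have a: "a > 0" unfolding a_def using Aut_pos by simp
  have pt: "real (card (copyset m G) choose j) = (\<Sum>ts\<in>tup m j. indicator {G. Et ts \<subseteq> G} G) / a" for G
  proof -
    have "real (card {ts \<in> tup m j. Et ts \<subseteq> G}) = (\<Sum>ts\<in>tup m j. indicator {G. Et ts \<subseteq> G} G)"
      using finite_tup by (simp add: indicator_def sum.If_cases Int_def)
    moreover have "real (card {ts \<in> tup m j. Et ts \<subseteq> G}) = real (card (copyset m G) choose j) * a"
      unfolding a_def count_identity[symmetric] by (simp add: algebra_simps)
    ultimately show ?thesis using a by (simp add: field_simps)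
  qed
  have int: "integrable (measure_pmf (gnp m p)) f" for f :: "nat set set \<Rightarrow> real"
    by (rule integrable_measure_pmf_finite[OF gnp_finite])
  have "measure_pmf.expectation (gnp m p) (\<lambda>G. real (card (copyset m G) choose j)) =
        measure_pmf.expectation (gnp m p) (\<lambda>G. (\<Sum>ts\<in>tup m j. indicator {G. Et ts \<subseteq> G} G)) / a"
    unfolding pt by simp
  also have "measure_pmf.expectation (gnp m p) (\<lambda>G. (\<Sum>ts\<in>tup m j. indicator {G. Et ts \<subseteq> G} G :: real)) =
        (\<Sum>ts\<in>tup m j. measure_pmf.prob (gnp m p) {G. Et ts \<subseteq> G})"
    by (subst Bochner_Integration.integral_sum) (auto intro: int)
  also have "\<dots> = (\<Sum>ts\<in>tup m j. p ^ card (Et ts))"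
    by (intro sum.cong refl gnp_prob_sub p Et_all_edges) (auto simp: tup_def)
  finally show ?thesis unfolding a_def .
qed

end


context sbg
begin

definition Vt :: "(nat \<Rightarrow> nat) list \<Rightarrow> nat set" where
  "Vt ts = \<Union>((\<lambda>g. g ` {0..<v}) ` set ts)"

fun pdisj :: "(nat \<Rightarrow> nat) list \<Rightarrow> bool" where
  "pdisj [] = True"
| "pdisj (f # ts) = (f ` {0..<v} \<inter> Vt ts = {} \<and> pdisj ts)"

lemma Et_Cons: "Et (f # ts) = img f \<union> Et ts"
  unfolding Et_def by simp

lemma Vt_Cons: "Vt (f # ts) = f ` {0..<v} \<union> Vt ts"
  unfolding Vt_def by simp

lemma Et_Nil: "Et [] = {}" and Vt_Nil: "Vt [] = {}"
  unfolding Et_def Vt_def by simp_all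

lemma img_sub_V: "x \<in> img g \<Longrightarrow> x \<subseteq> g ` {0..<v}"
  unfolding img_def using edge_sub by auto

lemma img_ne: "x \<in> img g \<Longrightarrow> x \<noteq> {}"
  unfolding img_def using edge_ne by auto

lemma Et_sub_Vt: "x \<in> Et ts \<Longrightarrow> x \<subseteq> Vt ts"
  unfolding Et_def Vt_def using img_sub_V by blast

lemma finite_Et: "finite (Et ts)"
  unfolding Et_def using finite_img by auto

lemma finite_Vt: "finite (Vt ts)"
  unfolding Vt_def by auto

lemma Inj_mem: "f \<in> Inj m \<Longrightarrow> a < v \<Longrightarrow> f a < m"
  unfolding Inj_def by (auto dest: PiE_mem)

lemma Inj_inj: "f \<in> Inj m \<Longrightarrow> inj_on f {0..<v}"
  unfolding Inj_def by auto

lemma Inj_card: "f \<in> Inj m \<Longrightarrow> card (f ` {0..<v}) = v"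
  using Inj_inj by (simp add: card_image)

lemma Vt_sub: "set ts \<subseteq> Inj m \<Longrightarrow> Vt ts \<subseteq> {0..<m}"
  unfolding Vt_def using Inj_mem by fastforce

lemma pdisj_props:
  "pdisj ts \<Longrightarrow> set ts \<subseteq> Inj m \<Longrightarrow> card (Et ts) = length ts * card EH \<and> card (Vt ts) = length ts * v"
proof (induction ts)
  case Nil
  then show ?case by (simp add: Et_Nil Vt_Nil)
next
  case (Cons f ts)
  have f: "f \<in> Inj m" and ts: "set ts \<subseteq> Inj m" using Cons.prems by auto
  have d: "f ` {0..<v} \<inter> Vt ts = {}" and pd: "pdisj ts" using Cons.prems by auto
  have IH: "card (Et ts) = length ts * card EH" "card (Vt ts) = length ts * v" using Cons.IH[OF pd ts] by auto
  have dE: "img f \<inter> Et ts = {}"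
  proof (rule ccontr)
    assume "img f \<inter> Et ts \<noteq> {}"
    then obtain x where x: "x \<in> img f" "x \<in> Et ts" by blast
    have "x \<subseteq> f ` {0..<v}" "x \<subseteq> Vt ts" "x \<noteq> {}" using img_sub_V[OF x(1)] Et_sub_Vt[OF x(2)] img_ne[OF x(1)] by auto
    then show False using d by blast
  qed
  have "card (Et (f # ts)) = card (img f) + card (Et ts)"
    unfolding Et_Cons by (rule card_Un_disjoint[OF finite_img finite_Et dE])
  moreover have "card (Vt (f # ts)) = card (f ` {0..<v}) + card (Vt ts)"
    unfolding Vt_Cons by (rule card_Un_disjoint[OF _ finite_Vt d]) simp
  ultimately show ?case using IH img_card[OF f] Inj_card[OF f] by simp
qed

lemma tup_Suc: "tup m (Suc j) = (\<lambda>(ts, f). f # ts) ` (SIGMA ts:tup m j. {f \<in> Inj m. img f \<notin> img ` set ts})"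
proof (intro equalityI subsetI)
  fix x assume "x \<in> tup m (Suc j)"
  then obtain f ts where x: "x = f # ts" and "length ts = j" "f \<in> Inj m" "set ts \<subseteq> Inj m"
      "img f \<notin> set (map img ts)" "distinct (map img ts)"
    unfolding tup_def by (cases x) auto
  then show "x \<in> (\<lambda>(ts, f). f # ts) ` (SIGMA ts:tup m j. {f \<in> Inj m. img f \<notin> img ` set ts})"
    unfolding tup_def by auto
qed (auto simp: tup_def)

lemma sum_tup_Suc:
  "(\<Sum>ts'\<in>tup m (Suc j). F ts') = (\<Sum>ts\<in>tup m j. \<Sum>f\<in>{f \<in> Inj m. img f \<notin> img ` set ts}. F (f # ts))"
proof -
  have inj: "inj_on (\<lambda>(ts, f). f # ts) X" for X :: "((nat \<Rightarrow> nat) list \<times> (nat \<Rightarrow> nat)) set"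
    by (auto simp: inj_on_def)
  have "(\<Sum>ts'\<in>tup m (Suc j). F ts') = (\<Sum>x\<in>(SIGMA ts:tup m j. {f \<in> Inj m. img f \<notin> img ` set ts}). F ((\<lambda>(ts, f). f # ts) x))"
    unfolding tup_Suc using sum.reindex[OF inj, of F] by (simp add: comp_def)
  also have "\<dots> = (\<Sum>ts\<in>tup m j. \<Sum>f\<in>{f \<in> Inj m. img f \<notin> img ` set ts}. F (f # ts))"
  proof -
    have "(\<Sum>ts\<in>tup m j. \<Sum>f\<in>{f \<in> Inj m. img f \<notin> img ` set ts}. F (f # ts)) =
          (\<Sum>(ts, f)\<in>(SIGMA ts:tup m j. {f \<in> Inj m. img f \<notin> img ` set ts}). F (f # ts))"
      by (rule sum.Sigma) (auto simp: finite_tup finite_Inj)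
    then show ?thesis by (simp add: case_prod_unfold)
  qed
  finally show ?thesis .
qed

definition AA :: "nat \<Rightarrow> real \<Rightarrow> nat \<Rightarrow> real" where
  "AA m p j = (\<Sum>ts\<in>tup m j. if pdisj ts then p ^ card (Et ts) else 0)"

definition BB :: "nat \<Rightarrow> real \<Rightarrow> nat \<Rightarrow> real" where
  "BB m p j = (\<Sum>ts\<in>tup m j. if pdisj ts then 0 else p ^ card (Et ts))"

lemma SS_split: "(\<Sum>ts\<in>tup m j. p ^ card (Et ts)) = AA m p j + BB m p j"
  unfolding AA_def BB_def by (simp add: sum.distrib[symmetric] if_distrib if_distribR cong: if_cong)

lemma disj_not_img:
  assumes "f ` {0..<v} \<inter> Vt ts = {}"
  shows "img f \<notin> img ` set ts"
proof
  assume "img f \<in> img ` set ts"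
  then obtain g where g: "g \<in> set ts" "img f = img g" by auto
  have "f ` {0..<v} = g ` {0..<v}" using union_img[of f] union_img[of g] g(2) by simp
  moreover have "g ` {0..<v} \<subseteq> Vt ts" using g(1) unfolding Vt_def by auto
  moreover have "f ` {0..<v} \<noteq> {}" using v_ge2 by auto
  ultimately show False using assms by blast
qed

lemma card_disj_inj:
  assumes W: "W \<subseteq> {0..<m}"
  shows "card {f \<in> Inj m. f ` {0..<v} \<inter> W = {}} = (\<Prod>i<v. m - card W - i)"
proof -
  have eq: "{f \<in> Inj m. f ` {0..<v} \<inter> W = {}} = {f \<in> {0..<v} \<rightarrow>\<^sub>E ({0..<m} - W). inj_on f {0..<v}}"
  proof (intro equalityI subsetI)
    fix f assume "f \<in> {f \<in> Inj m. f ` {0..<v} \<inter> W = {}}"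
    then have f: "f \<in> {0..<v} \<rightarrow>\<^sub>E {0..<m}" "inj_on f {0..<v}" "f ` {0..<v} \<inter> W = {}"
      unfolding Inj_def by auto
    have "f \<in> {0..<v} \<rightarrow>\<^sub>E ({0..<m} - W)"
    proof (rule PiE_I)
      fix a assume a: "a \<in> {0..<v}"
      then have "f a \<in> {0..<m}" using f(1) by (rule PiE_mem[rotated])
      moreover have "f a \<notin> W" using f(3) a by blast
      ultimately show "f a \<in> {0..<m} - W" by blast
    next
      fix a assume "a \<notin> {0..<v}" then show "f a = undefined" using f(1) by (simp add: PiE_def extensional_def)
    qed
    then show "f \<in> {f \<in> {0..<v} \<rightarrow>\<^sub>E ({0..<m} - W). inj_on f {0..<v}}" using f(2) by blast
  next
    fix f assume "f \<in> {f \<in> {0..<v} \<rightarrow>\<^sub>E ({0..<m} - W). inj_on f {0..<v}}"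
    then have f: "f \<in> {0..<v} \<rightarrow>\<^sub>E ({0..<m} - W)" "inj_on f {0..<v}" by auto
    have "f \<in> {0..<v} \<rightarrow>\<^sub>E {0..<m}" using f(1) PiE_mono[of "{0..<v}" "\<lambda>_. {0..<m} - W" "\<lambda>_. {0..<m}"] by blast
    moreover have "f ` {0..<v} \<inter> W = {}" using f(1) by (auto dest: PiE_mem)
    ultimately show "f \<in> {f \<in> Inj m. f ` {0..<v} \<inter> W = {}}" using f(2) unfolding Inj_def by blast
  qed
  have cC: "card ({0..<m} - W) = m - card W" using W by (simp add: card_Diff_subset finite_subset)
  have "card {f \<in> {0..<v} \<rightarrow>\<^sub>E ({0..<m} - W). inj_on f {0..<v}} =
        card ({0..<m} - W) ^ (card {0..<v} - card {0..<v}) * prod ((-) (card ({0..<m} - W))) {0..<card {0..<v}}"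
    by (rule card_inj_on_subset_funcset) auto
  then show ?thesis unfolding eq cC by (simp add: atLeast0LessThan)
qed

lemma AA_Suc:
  assumes p: "p \<ge> 0"
  shows "AA m p (Suc j) = AA m p j * real (\<Prod>i<v. m - j * v - i) * p ^ card EH"
proof -
  have "AA m p (Suc j) = (\<Sum>ts\<in>tup m j. \<Sum>f\<in>{f \<in> Inj m. img f \<notin> img ` set ts}.
            if pdisj (f # ts) then p ^ card (Et (f # ts)) else 0)"
    unfolding AA_def by (rule sum_tup_Suc)
  also have "\<dots> = (\<Sum>ts\<in>tup m j. if pdisj ts then real (\<Prod>i<v. m - j * v - i) * p ^ (Suc j * card EH) else 0)"
  proof (rule sum.cong[OF refl])
    fix ts assume ts: "ts \<in> tup m j"
    have tsI: "set ts \<subseteq> Inj m" and lts: "length ts = j" using ts unfolding tup_def by auto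
    show "(\<Sum>f\<in>{f \<in> Inj m. img f \<notin> img ` set ts}. if pdisj (f # ts) then p ^ card (Et (f # ts)) else 0) =
          (if pdisj ts then real (\<Prod>i<v. m - j * v - i) * p ^ (Suc j * card EH) else 0)"
    proof (cases "pdisj ts")
      case False
      then show ?thesis by simp
    next
      case True
      have "(\<Sum>f\<in>{f \<in> Inj m. img f \<notin> img ` set ts}. if pdisj (f # ts) then p ^ card (Et (f # ts)) else 0) =
            (\<Sum>f\<in>{f \<in> Inj m. f ` {0..<v} \<inter> Vt ts = {}}. p ^ (Suc j * card EH))"
      proof (rule sum.mono_neutral_cong_right)
        show "finite {f \<in> Inj m. img f \<notin> img ` set ts}" using finite_Inj by simp
        show "{f \<in> Inj m. f ` {0..<v} \<inter> Vt ts = {}} \<subseteq> {f \<in> Inj m. img f \<notin> img ` set ts}"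
          using disj_not_img by auto
        show "\<forall>f\<in>{f \<in> Inj m. img f \<notin> img ` set ts} - {f \<in> Inj m. f ` {0..<v} \<inter> Vt ts = {}}.
              (if pdisj (f # ts) then p ^ card (Et (f # ts)) else 0) = 0" by auto
        show "(if pdisj (f # ts) then p ^ card (Et (f # ts)) else 0) = p ^ (Suc j * card EH)"
          if "f \<in> {f \<in> Inj m. f ` {0..<v} \<inter> Vt ts = {}}" for f
        proof -
          have "pdisj (f # ts)" using that True by simp
          moreover have "set (f # ts) \<subseteq> Inj m" using that tsI by auto
          ultimately have "card (Et (f # ts)) = length (f # ts) * card EH" using pdisj_props by blast
          then have "card (Et (f # ts)) = Suc j * card EH" using lts by simp
          then show ?thesis using \<open>pdisj (f # ts)\<close> by simp
        qed
      qed
      also have "\<dots> = real (card {f \<in> Inj m. f ` {0..<v} \<inter> Vt ts = {}}) * p ^ (Suc j * card EH)" by simp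
      also have "card {f \<in> Inj m. f ` {0..<v} \<inter> Vt ts = {}} = (\<Prod>i<v. m - j * v - i)"
        using card_disj_inj[OF Vt_sub[OF tsI]] pdisj_props[OF True tsI] lts by simp
      finally show ?thesis using True by simp
    qed
  qed
  also have "\<dots> = (\<Sum>ts\<in>tup m j. if pdisj ts then p ^ card (Et ts) else 0) * real (\<Prod>i<v. m - j * v - i) * p ^ card EH"
    unfolding sum_distrib_right
  proof (rule sum.cong[OF refl])
    fix ts assume ts: "ts \<in> tup m j"
    have tsI: "set ts \<subseteq> Inj m" and lts: "length ts = j" using ts unfolding tup_def by auto
    show "(if pdisj ts then real (\<Prod>i<v. m - j * v - i) * p ^ (Suc j * card EH) else 0) =
          (if pdisj ts then p ^ card (Et ts) else 0) * real (\<Prod>i<v. m - j * v - i) * p ^ card EH"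
      using pdisj_props[OF _ tsI] lts by (auto simp: power_add mult_ac)
  qed
  finally show ?thesis unfolding AA_def .
qed

lemma AA_0: "AA m p 0 = 1"
proof -
  have "tup m 0 = {[]}" unfolding tup_def by auto
  then show ?thesis unfolding AA_def by (simp add: Et_Nil)
qed


lemma lim_ratio: "(\<lambda>m::nat. (real m - a) / real m) \<longlonglongrightarrow> 1"
  by real_asymp

lemma pp_pow:
  assumes "m > 0" "c > 0"
  shows "((c / real m) powr (real v / real (card EH))) ^ card EH = (c / real m) ^ v"
proof -
  have cm: "c / real m > 0" using assms by simp
  have "((c / real m) powr (real v / real (card EH))) ^ card EH = (c / real m) powr (real (card EH) * (real v / real (card EH)))"
    by (rule powr_power) (use assms in simp)
  also have "real (card EH) * (real v / real (card EH)) = real v" using e_pos by simp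
  also have "(c / real m) powr real v = (c / real m) ^ v" using cm by (rule powr_realpow)
  finally show ?thesis .
qed

lemma factor_lim:
  assumes c: "c > 0"
  shows "(\<lambda>m. real (\<Prod>i<v. m - j * v - i) * ((c / real m) powr (real v / real (card EH))) ^ card EH) \<longlonglongrightarrow> c ^ v"
proof -
  have ev: "eventually (\<lambda>m. real (\<Prod>i<v. m - j * v - i) * ((c / real m) powr (real v / real (card EH))) ^ card EH =
        c ^ v * (\<Prod>i<v. (real m - real (j * v + i)) / real m)) sequentially"
    using eventually_ge_at_top[of "j * v + v + 1"]
  proof eventually_elim
    case (elim m)
    then have m: "m > 0" by simp
    have "real (\<Prod>i<v. m - j * v - i) = (\<Prod>i<v. real m - real (j * v + i))"
      unfolding of_nat_prod
    proof (rule prod.cong[OF refl])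
      fix i assume "i \<in> {..<v}"
      then have "j * v + i \<le> m" using elim by simp
      then show "real (m - j * v - i) = real m - real (j * v + i)" by (simp add: of_nat_diff)
    qed
    moreover have "(\<Prod>i<v. (real m - real (j * v + i)) / real m) = (\<Prod>i<v. real m - real (j * v + i)) / real m ^ v"
      by (simp add: prod_dividef)
    ultimately show ?case using pp_pow[OF m c]
      by (simp add: power_divide)
  qed
  have "(\<lambda>m. c ^ v * (\<Prod>i<v. (real m - real (j * v + i)) / real m)) \<longlonglongrightarrow> c ^ v * (\<Prod>i<v. 1)"
    by (intro tendsto_mult tendsto_const tendsto_prod lim_ratio)
  then have "(\<lambda>m. c ^ v * (\<Prod>i<v. (real m - real (j * v + i)) / real m)) \<longlonglongrightarrow> c ^ v" by simp
  then show ?thesis using tendsto_cong[OF ev] by simp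
qed

lemma AA_lim:
  assumes c: "c > 0"
  shows "(\<lambda>m. AA m ((c / real m) powr (real v / real (card EH))) j) \<longlonglongrightarrow> c ^ (v * j)"
proof (induction j)
  case 0
  then show ?case by (simp add: AA_0)
next
  case (Suc j)
  have eq: "AA m ((c / real m) powr (real v / real (card EH))) (Suc j) =
      AA m ((c / real m) powr (real v / real (card EH))) j *
      (real (\<Prod>i<v. m - j * v - i) * ((c / real m) powr (real v / real (card EH))) ^ card EH)" for m
    by (subst AA_Suc) (simp_all add: mult_ac)
  have "(\<lambda>m. AA m ((c / real m) powr (real v / real (card EH))) j *
      (real (\<Prod>i<v. m - j * v - i) * ((c / real m) powr (real v / real (card EH))) ^ card EH)) \<longlonglongrightarrow> c ^ (v * j) * c ^ v"
    by (intro tendsto_mult Suc factor_lim c)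
  then show ?case unfolding eq by (simp add: power_add mult_ac)
qed

end


context sbg
begin

lemma pdisj_pw:
  "pdisj ts \<Longrightarrow> g \<in> set ts \<Longrightarrow> g' \<in> set ts \<Longrightarrow> g \<noteq> g' \<Longrightarrow> g ` {0..<v} \<inter> g' ` {0..<v} = {}"
proof (induction ts)
  case Nil
  then show ?case by simp
next
  case (Cons h ts)
  have d: "h ` {0..<v} \<inter> Vt ts = {}" and pd: "pdisj ts" using Cons.prems by auto
  have sub: "x \<in> set ts \<Longrightarrow> x ` {0..<v} \<subseteq> Vt ts" for x unfolding Vt_def by auto
  consider "g = h" "g' \<in> set ts" | "g' = h" "g \<in> set ts" | "g \<in> set ts" "g' \<in> set ts"
    using Cons.prems by auto
  then show ?case
  proof cases
    case 1 then show ?thesis using d sub by blast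
  next
    case 2 then show ?thesis using d sub by blast
  next
    case 3 then show ?thesis using Cons.IH[OF pd] Cons.prems by blast
  qed
qed

lemma CL:
  assumes pd: "pdisj ts" and tsI: "set ts \<subseteq> Inj m" and f: "f \<in> Inj m" and sub: "img f \<subseteq> Et ts"
  shows "img f \<in> img ` set ts"
proof (rule ccontr)
  assume nimg: "img f \<notin> img ` set ts"
  define G where "G = set ts"
  define V where "V = {0..<v}"
  define Wg where "Wg = (\<lambda>g. {a \<in> V. f a \<in> g ` V})"
  define Dg where "Dg = (\<lambda>g. {\<epsilon> \<in> EH. f ` \<epsilon> \<in> img g})"
  have finG: "finite G" unfolding G_def by simp
  have pw: "g \<in> G \<Longrightarrow> g' \<in> G \<Longrightarrow> g \<noteq> g' \<Longrightarrow> g ` V \<inter> g' ` V = {}" for g g'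
    using pdisj_pw[OF pd] unfolding G_def V_def by blast
  have subg: "(Wg g, Dg g) \<in> subgraphs v EH" for g
  proof -
    have "\<epsilon> \<subseteq> Wg g" if "\<epsilon> \<in> Dg g" for \<epsilon>
    proof
      fix a assume a: "a \<in> \<epsilon>"
      have e: "\<epsilon> \<in> EH" "f ` \<epsilon> \<in> img g" using that unfolding Dg_def by auto
      have "f ` \<epsilon> \<subseteq> g ` V" using img_sub_V[OF e(2)] unfolding V_def .
      then show "a \<in> Wg g" using a edge_sub[OF e(1)] unfolding Wg_def V_def by auto
    qed
    then show ?thesis unfolding subgraphs_def Wg_def Dg_def V_def by auto
  qed
  have Dcov: "EH = (\<Union>g\<in>G. Dg g)"
  proof (intro equalityI subsetI)
    fix \<epsilon> assume e: "\<epsilon> \<in> EH"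
    then have "f ` \<epsilon> \<in> img f" unfolding img_def by auto
    then have "f ` \<epsilon> \<in> Et ts" using sub by auto
    then obtain g where "g \<in> G" "f ` \<epsilon> \<in> img g" unfolding Et_def G_def by auto
    then show "\<epsilon> \<in> (\<Union>g\<in>G. Dg g)" using e unfolding Dg_def by auto
  qed (auto simp: Dg_def)
  have fe_ne: "\<epsilon> \<in> EH \<Longrightarrow> f ` \<epsilon> \<noteq> {}" for \<epsilon> using edge_ne by auto
  have Ddisj: "g \<in> G \<Longrightarrow> g' \<in> G \<Longrightarrow> g \<noteq> g' \<Longrightarrow> Dg g \<inter> Dg g' = {}" for g g'
  proof -
    assume gg: "g \<in> G" "g' \<in> G" "g \<noteq> g'"
    show "Dg g \<inter> Dg g' = {}"
    proof (rule ccontr)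
      assume "Dg g \<inter> Dg g' \<noteq> {}"
      then obtain \<epsilon> where e: "\<epsilon> \<in> EH" "f ` \<epsilon> \<in> img g" "f ` \<epsilon> \<in> img g'" unfolding Dg_def by auto
      have "f ` \<epsilon> \<subseteq> g ` V" "f ` \<epsilon> \<subseteq> g' ` V" using img_sub_V[OF e(2)] img_sub_V[OF e(3)] unfolding V_def by auto
      then show False using pw[OF gg] fe_ne[OF e(1)] by blast
    qed
  qed
  have Wcov: "V = (\<Union>g\<in>G. Wg g)"
  proof (intro equalityI subsetI)
    fix a assume a: "a \<in> V"
    obtain \<epsilon> where e: "\<epsilon> \<in> EH" "a \<in> \<epsilon>" using no_isolated a unfolding V_def by auto
    obtain g where g: "g \<in> G" "\<epsilon> \<in> Dg g" using e(1) Dcov by blast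
    then have "f ` \<epsilon> \<subseteq> g ` V" using img_sub_V unfolding Dg_def V_def by auto
    then have "a \<in> Wg g" using e a unfolding Wg_def by auto
    then show "a \<in> (\<Union>g\<in>G. Wg g)" using g by auto
  qed (auto simp: Wg_def)
  have Wdisj: "g \<in> G \<Longrightarrow> g' \<in> G \<Longrightarrow> g \<noteq> g' \<Longrightarrow> Wg g \<inter> Wg g' = {}" for g g'
    using pw unfolding Wg_def by blast
  have finW: "finite (Wg g)" for g unfolding Wg_def V_def by simp
  have finD: "finite (Dg g)" for g unfolding Dg_def using finite_EH by simp
  have sumD: "card EH = (\<Sum>g\<in>G. card (Dg g))"
    using Dcov card_UN_disjoint[OF finG, of Dg] finD Ddisj by simp
  have sumW: "v = (\<Sum>g\<in>G. card (Wg g))"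
  proof -
    have "card V = (\<Sum>g\<in>G. card (Wg g))"
      using Wcov card_UN_disjoint[OF finG, of Wg] finW Wdisj by simp
    then show ?thesis unfolding V_def by simp
  qed
  have notV: "Wg g \<noteq> V" if g: "g \<in> G" for g
  proof
    assume WV: "Wg g = V"
    have "img f \<subseteq> img g"
    proof
      fix x assume "x \<in> img f"
      then obtain \<epsilon> where e: "\<epsilon> \<in> EH" "x = f ` \<epsilon>" unfolding img_def by auto
      obtain g' where g': "g' \<in> G" "\<epsilon> \<in> Dg g'" using e(1) Dcov by blast
      have "f ` \<epsilon> \<subseteq> g' ` V" using g'(2) img_sub_V unfolding Dg_def V_def by auto
      moreover have "f ` \<epsilon> \<subseteq> g ` V" using WV edge_sub[OF e(1)] unfolding Wg_def V_def by auto
      ultimately have "g' = g" using pw[OF g'(1) g] fe_ne[OF e(1)] by blast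
      then show "x \<in> img g" using g'(2) e unfolding Dg_def by auto
    qed
    moreover have "card (img f) = card (img g)" using img_card f tsI g unfolding G_def by auto
    ultimately have "img f = img g" using finite_img by (metis card_subset_eq)
    then show False using nimg g unfolding G_def by auto
  qed
  have each: "real (card (Dg g)) * real v \<le> real (card EH) * real (card (Wg g))" for g
    using sub_le[OF subg] .
  obtain g0 where g0: "g0 \<in> G" "Wg g0 \<noteq> {}"
  proof -
    have "0 \<in> V" using v_ge2 unfolding V_def by simp
    then obtain g where "g \<in> G" "0 \<in> Wg g" using Wcov by blast
    then show ?thesis using that by blast
  qed
  have strict: "real (card (Dg g0)) * real v < real (card EH) * real (card (Wg g0))"
  proof (rule sub_strict[OF subg g0(2)])
    show "(Wg g0, Dg g0) \<noteq> ({0..<v}, EH)" using notV[OF g0(1)] unfolding V_def by auto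
  qed
  have "(\<Sum>g\<in>G. real (card (Dg g)) * real v) < (\<Sum>g\<in>G. real (card EH) * real (card (Wg g)))"
    by (rule sum_strict_mono_ex1[OF finG]) (use each strict g0 in auto)
  moreover have "(\<Sum>g\<in>G. real (card (Dg g)) * real v) = real (card EH) * real v"
    unfolding sumD by (simp add: sum_distrib_right)
  moreover have "(\<Sum>g\<in>G. real (card EH) * real (card (Wg g))) = real (card EH) * real v"
  proof -
    have "real v = (\<Sum>g\<in>G. real (card (Wg g)))" using sumW by (metis of_nat_sum)
    then show ?thesis by (simp add: sum_distrib_left)
  qed
  ultimately show False by simp
qed


definition Wf :: "(nat \<Rightarrow> nat) list \<Rightarrow> (nat \<Rightarrow> nat) \<Rightarrow> nat set" where
  "Wf ts f = {a \<in> {0..<v}. f a \<in> Vt ts}"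

definition Df :: "(nat \<Rightarrow> nat) list \<Rightarrow> (nat \<Rightarrow> nat) \<Rightarrow> nat set set" where
  "Df ts f = {\<epsilon> \<in> EH. f ` \<epsilon> \<in> Et ts}"

lemma WD_sub: "(Wf ts f, Df ts f) \<in> subgraphs v EH"
proof -
  have "\<epsilon> \<subseteq> Wf ts f" if "\<epsilon> \<in> Df ts f" for \<epsilon>
  proof
    fix a assume a: "a \<in> \<epsilon>"
    have e: "\<epsilon> \<in> EH" "f ` \<epsilon> \<in> Et ts" using that unfolding Df_def by auto
    have "f ` \<epsilon> \<subseteq> Vt ts" using Et_sub_Vt[OF e(2)] .
    then show "a \<in> Wf ts f" using a edge_sub[OF e(1)] unfolding Wf_def by auto
  qed
  then show ?thesis unfolding subgraphs_def Wf_def Df_def by auto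
qed

lemma new_card:
  assumes f: "f \<in> Inj m"
  shows "card (img f - Et ts) = card EH - card (Df ts f)"
proof -
  have eq: "img f - Et ts = (\<lambda>\<epsilon>. f ` \<epsilon>) ` (EH - Df ts f)"
    unfolding img_def Df_def by auto
  have "card ((\<lambda>\<epsilon>. f ` \<epsilon>) ` (EH - Df ts f)) = card (EH - Df ts f)"
    by (rule card_image) (rule inj_on_subset[OF img_inj[OF f]], auto)
  also have "\<dots> = card EH - card (Df ts f)"
    by (rule card_Diff_subset) (use finite_EH in \<open>auto simp: Df_def intro: finite_subset\<close>)
  finally show ?thesis unfolding eq .
qed

lemma card_Wf_le:
  assumes W: "W \<subseteq> {0..<v}" and tsI: "Vt ts \<subseteq> {0..<m}"
  shows "card {f \<in> Inj m. Wf ts f = W} \<le> card (Vt ts) ^ card W * m ^ (v - card W)"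
proof -
  define T where "T = (\<lambda>a. if a \<in> W then Vt ts else {0..<m})"
  have sub: "{f \<in> Inj m. Wf ts f = W} \<subseteq> PiE {0..<v} T"
  proof
    fix f assume "f \<in> {f \<in> Inj m. Wf ts f = W}"
    then have f: "f \<in> Inj m" "Wf ts f = W" by auto
    show "f \<in> PiE {0..<v} T"
    proof (rule PiE_I)
      fix a assume a: "a \<in> {0..<v}"
      show "f a \<in> T a"
      proof (cases "a \<in> W")
        case True
        then show ?thesis using f(2) unfolding T_def Wf_def by auto
      next
        case False
        then show ?thesis using Inj_mem[OF f(1)] a unfolding T_def by auto
      qed
    next
      fix a assume "a \<notin> {0..<v}"
      then show "f a = undefined" using f(1) unfolding Inj_def by (auto simp: PiE_def extensional_def)
    qed
  qed
  have "card {f \<in> Inj m. Wf ts f = W} \<le> card (PiE {0..<v} T)"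
    by (rule card_mono[OF _ sub]) (simp add: finite_PiE T_def finite_Vt)
  also have "card (PiE {0..<v} T) = (\<Prod>a\<in>{0..<v}. card (T a))"
    by (rule card_PiE) simp
  also have "\<dots> = (\<Prod>a\<in>{0..<v} \<inter> {a. a \<in> W}. card (Vt ts)) * (\<Prod>a\<in>{0..<v} \<inter> - {a. a \<in> W}. m)"
  proof -
    have "(\<Prod>a\<in>{0..<v}. card (T a)) = (\<Prod>a\<in>{0..<v}. if a \<in> W then card (Vt ts) else m)"
      unfolding T_def by (intro prod.cong) auto
    also have "\<dots> = (\<Prod>a\<in>{0..<v} \<inter> {a. a \<in> W}. card (Vt ts)) * (\<Prod>a\<in>{0..<v} \<inter> - {a. a \<in> W}. m)"
      by (rule prod.If_cases) simp
    finally show ?thesis .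
  qed
  also have "\<dots> = card (Vt ts) ^ card W * m ^ (v - card W)"
  proof -
    have "{0..<v} \<inter> {a. a \<in> W} = W" using W by auto
    moreover have "card ({0..<v} \<inter> - {a. a \<in> W}) = v - card W"
    proof -
      have "{0..<v} \<inter> - {a. a \<in> W} = {0..<v} - W" by auto
      then show ?thesis using W by (simp add: card_Diff_subset finite_subset)
    qed
    ultimately show ?thesis by simp
  qed
  finally show ?thesis .
qed

lemma fsum_bound:
  assumes F: "F \<subseteq> Inj m" and Sg: "Sg \<subseteq> subgraphs v EH" and inS: "\<And>f. f \<in> F \<Longrightarrow> (Wf ts f, Df ts f) \<in> Sg"
    and p: "p \<ge> 0" and tsI: "set ts \<subseteq> Inj m"
  shows "(\<Sum>f\<in>F. p ^ card (img f - Et ts)) \<le>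
         (\<Sum>(W, D)\<in>Sg. real (card (Vt ts)) ^ card W * real m ^ (v - card W) * p ^ (card EH - card D))"
proof -
  have finF: "finite F" using F finite_Inj finite_subset by blast
  have finS: "finite Sg" using Sg subgraphs_finite finite_subset by blast
  have "(\<Sum>f\<in>F. p ^ card (img f - Et ts)) = (\<Sum>f\<in>F. p ^ (card EH - card (snd (Wf ts f, Df ts f))))"
    using F new_card by (intro sum.cong) auto
  also have "\<dots> = (\<Sum>y\<in>Sg. \<Sum>f\<in>{f \<in> F. (Wf ts f, Df ts f) = y}. p ^ (card EH - card (snd (Wf ts f, Df ts f))))"
    by (rule sum.group[symmetric, OF finF finS]) (use inS in auto)
  also have "\<dots> \<le> (\<Sum>y\<in>Sg. real (card (Vt ts)) ^ card (fst y) * real m ^ (v - card (fst y)) * p ^ (card EH - card (snd y)))"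
  proof (rule sum_mono)
    fix y assume y: "y \<in> Sg"
    obtain W D where yWD: "y = (W, D)" by (cases y)
    have WV: "W \<subseteq> {0..<v}" using Sg y unfolding yWD subgraphs_def by auto
    have "(\<Sum>f\<in>{f \<in> F. (Wf ts f, Df ts f) = y}. p ^ (card EH - card (snd (Wf ts f, Df ts f)))) =
          real (card {f \<in> F. (Wf ts f, Df ts f) = y}) * p ^ (card EH - card D)"
      unfolding yWD by simp
    also have "\<dots> \<le> real (card {f \<in> Inj m. Wf ts f = W}) * p ^ (card EH - card D)"
    proof (rule mult_right_mono)
      have "{f \<in> F. (Wf ts f, Df ts f) = y} \<subseteq> {f \<in> Inj m. Wf ts f = W}" using F unfolding yWD by auto
      then show "real (card {f \<in> F. (Wf ts f, Df ts f) = y}) \<le> real (card {f \<in> Inj m. Wf ts f = W})"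
        by (intro of_nat_mono card_mono) (auto intro: finite_subset[OF _ finite_Inj])
    qed (use p in simp)
    also have "\<dots> \<le> real (card (Vt ts) ^ card W * m ^ (v - card W)) * p ^ (card EH - card D)"
      by (intro mult_right_mono of_nat_mono card_Wf_le WV Vt_sub tsI) (use p in simp)
    finally show "(\<Sum>f\<in>{f \<in> F. (Wf ts f, Df ts f) = y}. p ^ (card EH - card (snd (Wf ts f, Df ts f)))) \<le>
        real (card (Vt ts)) ^ card (fst y) * real m ^ (v - card (fst y)) * p ^ (card EH - card (snd y))"
      unfolding yWD by simp
  qed
  finally show ?thesis by (simp add: case_prod_unfold)
qed

definition KK :: "real \<Rightarrow> nat \<Rightarrow> real" where
  "KK c j = (real (j * v) + 1) ^ v * (1 + c) ^ v"

definition expo :: "nat set \<Rightarrow> nat set set \<Rightarrow> real" where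
  "expo W D = real (card D) * real v / real (card EH) - real (card W)"

lemma expo_le: "(W, D) \<in> subgraphs v EH \<Longrightarrow> expo W D \<le> 0"
  unfolding expo_def using sub_le[of W D] e_pos by (simp add: field_simps)

lemma expo_lt: "(W, D) \<in> subgraphs v EH \<Longrightarrow> W \<noteq> {} \<Longrightarrow> (W, D) \<noteq> ({0..<v}, EH) \<Longrightarrow> expo W D < 0"
  unfolding expo_def using sub_strict[of W D] e_pos by (simp add: field_simps)

lemma term_bound:
  assumes WD: "(W, D) \<in> subgraphs v EH" and m: "m \<ge> 1" and c: "c > 0" and N: "N \<le> j * v"
  shows "real N ^ card W * real m ^ (v - card W) * ((c / real m) powr (real v / real (card EH))) ^ (card EH - card D)
         \<le> KK c j * real m powr expo W D"
proof -
  have fin: "finite W" "finite D" using sub_finite[OF WD] by auto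
  have Wv: "card W \<le> v"
  proof -
    have "W \<subseteq> {0..<v}" using WD unfolding subgraphs_def by auto
    then show ?thesis using card_mono[of "{0..<v}" W] by simp
  qed
  have De: "card D \<le> card EH"
  proof -
    have "D \<subseteq> EH" using WD unfolding subgraphs_def by auto
    then show ?thesis using card_mono[OF finite_EH] by simp
  qed
  define t where "t = real v / real (card EH) * real (card EH - card D)"
  have t: "0 \<le> t" "t \<le> real v"
  proof -
    show "0 \<le> t" unfolding t_def by simp
    have "real (card EH - card D) \<le> real (card EH)" by simp
    then have "real v / real (card EH) * real (card EH - card D) \<le> real v / real (card EH) * real (card EH)"
      by (intro mult_left_mono) auto
    then show "t \<le> real v" unfolding t_def using e_pos by simp
  qed
  have mpos: "real m > 0" using m by simp
  have cm: "c / real m > 0" using c mpos by simp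
  have pp: "((c / real m) powr (real v / real (card EH))) ^ (card EH - card D) = c powr t / real m powr t"
  proof -
    have "((c / real m) powr (real v / real (card EH))) ^ (card EH - card D) =
          (c / real m) powr (real (card EH - card D) * (real v / real (card EH)))"
      by (rule powr_power) (use c m in simp)
    also have "\<dots> = (c / real m) powr t" unfolding t_def by (simp only: mult.commute)
    also have "\<dots> = c powr t / real m powr t" by (rule powr_divide)
    finally show ?thesis .
  qed
  have mv: "real m ^ (v - card W) = real m powr (real v - real (card W))"
    using powr_realpow[OF mpos, of "v - card W"] Wv by (simp add: of_nat_diff)
  have ex: "real v - real (card W) - t = expo W D"
    unfolding t_def expo_def using De e_pos by (simp add: of_nat_diff field_simps)
  have mm: "real m ^ (v - card W) / real m powr t = real m powr expo W D"
    unfolding mv ex[symmetric] by (simp add: powr_diff)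
  have cbound: "c powr t \<le> (1 + c) ^ v"
  proof -
    have "c powr t \<le> (1 + c) powr t" by (rule powr_mono2) (use t c in auto)
    also have "\<dots> \<le> (1 + c) powr real v" by (rule powr_mono) (use t c in auto)
    also have "\<dots> = (1 + c) ^ v" by (rule powr_realpow) (use c in auto)
    finally show ?thesis .
  qed
  have Nbound: "real N ^ card W \<le> (real (j * v) + 1) ^ v"
  proof -
    have "real N ^ card W \<le> (real (j * v) + 1) ^ card W"
    proof (rule power_mono)
      have "real N \<le> real (j * v)" using N by (rule of_nat_mono)
      then show "real N \<le> real (j * v) + 1" by linarith
    qed simp
    also have "\<dots> \<le> (real (j * v) + 1) ^ v"
      by (rule power_increasing[OF Wv]) simp
    finally show ?thesis .
  qed
  have "real N ^ card W * real m ^ (v - card W) * ((c / real m) powr (real v / real (card EH))) ^ (card EH - card D)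
        = real N ^ card W * c powr t * (real m ^ (v - card W) / real m powr t)"
    unfolding pp by simp
  also have "\<dots> = real N ^ card W * c powr t * real m powr expo W D" unfolding mm ..
  also have "\<dots> \<le> (real (j * v) + 1) ^ v * (1 + c) ^ v * real m powr expo W D"
    by (intro mult_right_mono mult_mono Nbound cbound) auto
  finally show ?thesis unfolding KK_def .
qed

end


context sbg
begin

lemma card_Vt_le: "set ts \<subseteq> Inj m \<Longrightarrow> card (Vt ts) \<le> length ts * v"
proof (induction ts)
  case Nil
  then show ?case by (simp add: Vt_Nil)
next
  case (Cons f ts)
  have "card (Vt (f # ts)) \<le> card (f ` {0..<v}) + card (Vt ts)"
    unfolding Vt_Cons by (rule card_Un_le)
  also have "card (f ` {0..<v}) \<le> v" using card_image_le[of "{0..<v}" f] by simp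
  finally show ?case using Cons by simp
qed

lemma L1:
  assumes tsI: "set ts \<subseteq> Inj m" and m: "m \<ge> 1" and c: "c > 0"
  shows "(\<Sum>f\<in>Inj m. ((c / real m) powr (real v / real (card EH))) ^ card (img f - Et ts))
         \<le> real (card (subgraphs v EH)) * KK c (length ts)"
proof -
  define p where "p = (c / real m) powr (real v / real (card EH))"
  have p: "p \<ge> 0" unfolding p_def by simp
  have "(\<Sum>f\<in>Inj m. p ^ card (img f - Et ts)) \<le>
        (\<Sum>(W, D)\<in>subgraphs v EH. real (card (Vt ts)) ^ card W * real m ^ (v - card W) * p ^ (card EH - card D))"
    by (rule fsum_bound[OF subset_refl subset_refl WD_sub p tsI])
  also have "\<dots> \<le> (\<Sum>(W, D)\<in>subgraphs v EH. KK c (length ts))"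
  proof (rule sum_mono)
    fix y assume y: "y \<in> subgraphs v EH"
    obtain W D where yWD: "y = (W, D)" by (cases y)
    have WD: "(W, D) \<in> subgraphs v EH" using y yWD by simp
    have "real (card (Vt ts)) ^ card W * real m ^ (v - card W) * p ^ (card EH - card D) \<le> KK c (length ts) * real m powr expo W D"
      unfolding p_def by (rule term_bound[OF WD m c card_Vt_le[OF tsI]])
    also have "\<dots> \<le> KK c (length ts) * 1"
    proof (rule mult_left_mono)
      have "real m powr expo W D \<le> real m powr 0" by (rule powr_mono) (use expo_le[OF WD] m in auto)
      then show "real m powr expo W D \<le> 1" using m by simp
      show "0 \<le> KK c (length ts)" unfolding KK_def using c by simp
    qed
    finally show "(case y of (W, D) \<Rightarrow> real (card (Vt ts)) ^ card W * real m ^ (v - card W) * p ^ (card EH - card D))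
           \<le> (case y of (W, D) \<Rightarrow> KK c (length ts))" unfolding yWD by simp
  qed
  also have "\<dots> = real (card (subgraphs v EH)) * KK c (length ts)" by (simp add: case_prod_unfold)
  finally show ?thesis unfolding p_def .
qed

definition Sg2 :: "(nat set \<times> nat set set) set" where
  "Sg2 = {(W, D) \<in> subgraphs v EH. W \<noteq> {} \<and> (W, D) \<noteq> ({0..<v}, EH)}"

definition RR :: "real \<Rightarrow> nat \<Rightarrow> nat \<Rightarrow> real" where
  "RR c j m = (\<Sum>(W, D)\<in>Sg2. KK c j * real m powr expo W D)"

lemma RR_lim: "(\<lambda>m. RR c j m) \<longlonglongrightarrow> 0"
proof -
  have "(\<lambda>m. \<Sum>(W, D)\<in>Sg2. KK c j * real m powr expo W D) \<longlonglongrightarrow> (\<Sum>(W, D)\<in>Sg2. KK c j * 0)"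
    unfolding case_prod_unfold
  proof (intro tendsto_sum tendsto_mult tendsto_const)
    fix y assume y: "y \<in> Sg2"
    then have "expo (fst y) (snd y) < 0"
      unfolding Sg2_def by (cases y) (auto intro: expo_lt)
    then show "(\<lambda>m. real m powr expo (fst y) (snd y)) \<longlonglongrightarrow> 0"
      by (intro tendsto_neg_powr filterlim_real_sequentially)
  qed
  then show ?thesis unfolding RR_def by simp
qed

lemma L2:
  assumes pd: "pdisj ts" and tsI: "set ts \<subseteq> Inj m" and m: "m \<ge> 1" and c: "c > 0"
  shows "(\<Sum>f\<in>{f \<in> Inj m. f ` {0..<v} \<inter> Vt ts \<noteq> {} \<and> img f \<notin> img ` set ts}.
            ((c / real m) powr (real v / real (card EH))) ^ card (img f - Et ts))
         \<le> RR c (length ts) m"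
proof -
  define p where "p = (c / real m) powr (real v / real (card EH))"
  have p: "p \<ge> 0" unfolding p_def by simp
  define F where "F = {f \<in> Inj m. f ` {0..<v} \<inter> Vt ts \<noteq> {} \<and> img f \<notin> img ` set ts}"
  have inS: "(Wf ts f, Df ts f) \<in> Sg2" if f: "f \<in> F" for f
  proof -
    have fI: "f \<in> Inj m" using f unfolding F_def by auto
    have "Wf ts f \<noteq> {}" using f unfolding F_def Wf_def by auto
    moreover have "(Wf ts f, Df ts f) \<noteq> ({0..<v}, EH)"
    proof
      assume H: "(Wf ts f, Df ts f) = ({0..<v}, EH)"
      have "img f \<subseteq> Et ts"
      proof
        fix x assume "x \<in> img f"
        then obtain \<epsilon> where e: "\<epsilon> \<in> EH" "x = f ` \<epsilon>" unfolding img_def by auto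
        then have "\<epsilon> \<in> Df ts f" using H by simp
        then show "x \<in> Et ts" using e unfolding Df_def by simp
      qed
      then have "img f \<in> img ` set ts" by (rule CL[OF pd tsI fI])
      then show False using f unfolding F_def by auto
    qed
    ultimately show ?thesis unfolding Sg2_def using WD_sub by auto
  qed
  have "(\<Sum>f\<in>F. p ^ card (img f - Et ts)) \<le>
        (\<Sum>(W, D)\<in>Sg2. real (card (Vt ts)) ^ card W * real m ^ (v - card W) * p ^ (card EH - card D))"
    by (rule fsum_bound[OF _ _ inS p tsI]) (auto simp: F_def Sg2_def)
  also have "\<dots> \<le> (\<Sum>(W, D)\<in>Sg2. KK c (length ts) * real m powr expo W D)"
  proof (rule sum_mono)
    fix y assume y: "y \<in> Sg2"
    obtain W D where yWD: "y = (W, D)" by (cases y)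
    have WD: "(W, D) \<in> subgraphs v EH" using y yWD unfolding Sg2_def by simp
    show "(case y of (W, D) \<Rightarrow> real (card (Vt ts)) ^ card W * real m ^ (v - card W) * p ^ (card EH - card D))
           \<le> (case y of (W, D) \<Rightarrow> KK c (length ts) * real m powr expo W D)"
      unfolding yWD p_def using term_bound[OF WD m c card_Vt_le[OF tsI]] by simp
  qed
  finally show ?thesis unfolding RR_def F_def p_def .
qed

lemma Et_Cons_card: "card (Et (f # ts)) = card (Et ts) + card (img f - Et ts)"
proof -
  have "Et (f # ts) = Et ts \<union> (img f - Et ts)" unfolding Et_Cons by auto
  moreover have "card (Et ts \<union> (img f - Et ts)) = card (Et ts) + card (img f - Et ts)"
    by (rule card_Un_disjoint) (auto simp: finite_Et finite_img)
  ultimately show ?thesis by simp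
qed

lemma BB_Suc:
  assumes p: "p \<ge> 0"
    and C1: "\<And>ts. ts \<in> tup m j \<Longrightarrow> (\<Sum>f\<in>Inj m. p ^ card (img f - Et ts)) \<le> C1"
    and R: "\<And>ts. ts \<in> tup m j \<Longrightarrow> pdisj ts \<Longrightarrow>
        (\<Sum>f\<in>{f \<in> Inj m. f ` {0..<v} \<inter> Vt ts \<noteq> {} \<and> img f \<notin> img ` set ts}. p ^ card (img f - Et ts)) \<le> R"
  shows "BB m p (Suc j) \<le> BB m p j * C1 + AA m p j * R"
proof -
  have "BB m p (Suc j) = (\<Sum>ts\<in>tup m j. \<Sum>f\<in>{f \<in> Inj m. img f \<notin> img ` set ts}.
            if pdisj (f # ts) then 0 else p ^ card (Et (f # ts)))"
    unfolding BB_def by (rule sum_tup_Suc)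
  also have "\<dots> \<le> (\<Sum>ts\<in>tup m j. (if pdisj ts then 0 else p ^ card (Et ts)) * C1 + (if pdisj ts then p ^ card (Et ts) else 0) * R)"
  proof (rule sum_mono)
    fix ts assume ts: "ts \<in> tup m j"
    have pE: "p ^ card (Et ts) \<ge> 0" using p by simp
    show "(\<Sum>f\<in>{f \<in> Inj m. img f \<notin> img ` set ts}. if pdisj (f # ts) then 0 else p ^ card (Et (f # ts)))
          \<le> (if pdisj ts then 0 else p ^ card (Et ts)) * C1 + (if pdisj ts then p ^ card (Et ts) else 0) * R"
    proof (cases "pdisj ts")
      case False
      have "(\<Sum>f\<in>{f \<in> Inj m. img f \<notin> img ` set ts}. if pdisj (f # ts) then 0 else p ^ card (Et (f # ts)))
            = (\<Sum>f\<in>{f \<in> Inj m. img f \<notin> img ` set ts}. p ^ card (Et ts) * p ^ card (img f - Et ts))"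
        using False by (intro sum.cong) (auto simp: Et_Cons_card power_add)
      also have "\<dots> \<le> (\<Sum>f\<in>Inj m. p ^ card (Et ts) * p ^ card (img f - Et ts))"
        by (rule sum_mono2) (use finite_Inj p in auto)
      also have "\<dots> = p ^ card (Et ts) * (\<Sum>f\<in>Inj m. p ^ card (img f - Et ts))"
        by (simp add: sum_distrib_left)
      also have "\<dots> \<le> p ^ card (Et ts) * C1"
        by (rule mult_left_mono[OF C1[OF ts] pE])
      finally show ?thesis using False by simp
    next
      case True
      have "(\<Sum>f\<in>{f \<in> Inj m. img f \<notin> img ` set ts}. if pdisj (f # ts) then 0 else p ^ card (Et (f # ts)))
            = (\<Sum>f\<in>{f \<in> Inj m. f ` {0..<v} \<inter> Vt ts \<noteq> {} \<and> img f \<notin> img ` set ts}. p ^ card (Et ts) * p ^ card (img f - Et ts))"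
      proof (rule sum.mono_neutral_cong_right)
        show "finite {f \<in> Inj m. img f \<notin> img ` set ts}" using finite_Inj by simp
      qed (use True in \<open>auto simp: Et_Cons_card power_add\<close>)
      also have "\<dots> = p ^ card (Et ts) * (\<Sum>f\<in>{f \<in> Inj m. f ` {0..<v} \<inter> Vt ts \<noteq> {} \<and> img f \<notin> img ` set ts}. p ^ card (img f - Et ts))"
        by (simp add: sum_distrib_left)
      also have "\<dots> \<le> p ^ card (Et ts) * R"
        by (rule mult_left_mono[OF R[OF ts True] pE])
      finally show ?thesis using True by simp
    qed
  qed
  also have "\<dots> = BB m p j * C1 + AA m p j * R"
    unfolding BB_def AA_def by (simp add: sum.distrib sum_distrib_right)
  finally show ?thesis .
qed

lemma BB_0: "BB m p 0 = 0"
proof -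
  have "tup m 0 = {[]}" unfolding tup_def by auto
  then show ?thesis unfolding BB_def by simp
qed

lemma BB_nonneg: "p \<ge> 0 \<Longrightarrow> BB m p j \<ge> 0"
  unfolding BB_def by (intro sum_nonneg) auto

lemma BB_lim:
  assumes c: "c > 0"
  shows "(\<lambda>m. BB m ((c / real m) powr (real v / real (card EH))) j) \<longlonglongrightarrow> 0"
proof (induction j)
  case 0
  then show ?case by (simp add: BB_0)
next
  case (Suc j)
  define pp where "pp = (\<lambda>m. (c / real m) powr (real v / real (card EH)))"
  define C1 where "C1 = real (card (subgraphs v EH)) * KK c j"
  have up: "eventually (\<lambda>m. BB m (pp m) (Suc j) \<le> BB m (pp m) j * C1 + AA m (pp m) j * RR c j m) sequentially"
    using eventually_ge_at_top[of 1]
  proof eventually_elim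
    case (elim m)
    show ?case
    proof (rule BB_Suc)
      show "pp m \<ge> 0" unfolding pp_def by simp
      show "(\<Sum>f\<in>Inj m. pp m ^ card (img f - Et ts)) \<le> C1" if "ts \<in> tup m j" for ts
        using L1[of ts m c] that elim c unfolding pp_def C1_def tup_def by auto
      show "(\<Sum>f\<in>{f \<in> Inj m. f ` {0..<v} \<inter> Vt ts \<noteq> {} \<and> img f \<notin> img ` set ts}. pp m ^ card (img f - Et ts)) \<le> RR c j m"
        if "ts \<in> tup m j" "pdisj ts" for ts
        using L2[of ts m c] that elim c unfolding pp_def tup_def by auto
    qed
  qed
  have lo: "eventually (\<lambda>m. 0 \<le> BB m (pp m) (Suc j)) sequentially"
    by (intro always_eventually allI BB_nonneg) (simp add: pp_def)
  have "(\<lambda>m. BB m (pp m) j * C1 + AA m (pp m) j * RR c j m) \<longlonglongrightarrow> 0 * C1 + c ^ (v * j) * 0"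
    unfolding pp_def by (intro tendsto_add tendsto_mult Suc tendsto_const AA_lim c RR_lim)
  then have "(\<lambda>m. BB m (pp m) j * C1 + AA m (pp m) j * RR c j m) \<longlonglongrightarrow> 0" by simp
  then show ?case
    using tendsto_sandwich[OF lo up tendsto_const] unfolding pp_def by simp
qed

lemma SS_lim:
  assumes c: "c > 0"
  shows "(\<lambda>m. \<Sum>ts\<in>tup m j. ((c / real m) powr (real v / real (card EH))) ^ card (Et ts)) \<longlonglongrightarrow> c ^ (v * j)"
  unfolding SS_split using tendsto_add[OF AA_lim[OF c, of j] BB_lim[OF c, of j]] by simp

end


context sbg
begin

lemma moments_lim:
  assumes c: "c > 0" and mlim: "filterlim mm at_top sequentially"
  shows "(\<lambda>n. measure_pmf.expectation (gnp (mm n) ((c / real (mm n)) powr (real v / real (card EH))))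
            (\<lambda>G. real (card (copyset (mm n) G) choose j)))
         \<longlonglongrightarrow> (c ^ v / real (card (Aut v EH))) ^ j / fact j"
proof -
  define a where "a = real (card (Aut v EH))"
  have a: "a > 0" unfolding a_def using Aut_pos by simp
  define S where "S = (\<lambda>m. \<Sum>ts\<in>tup m j. ((c / real m) powr (real v / real (card EH))) ^ card (Et ts))"
  have Slim: "(\<lambda>n. S (mm n)) \<longlonglongrightarrow> c ^ (v * j)"
    unfolding S_def using filterlim_compose[OF SS_lim[OF c, of j] mlim] by (simp add: o_def)
  have ev: "eventually (\<lambda>n. measure_pmf.expectation (gnp (mm n) ((c / real (mm n)) powr (real v / real (card EH))))
            (\<lambda>G. real (card (copyset (mm n) G) choose j)) = S (mm n) / (a ^ j * fact j)) sequentially"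
  proof -
    have "eventually (\<lambda>n. mm n \<ge> nat \<lceil>c\<rceil> + 1) sequentially"
      using mlim by (simp add: filterlim_at_top)
    then show ?thesis
    proof eventually_elim
      case (elim n)
      have mpos: "real (mm n) > 0" using elim by simp
      have cm: "c / real (mm n) \<le> 1" using elim mpos c by (simp add: field_simps) linarith
      have p0: "0 \<le> (c / real (mm n)) powr (real v / real (card EH))" by simp
      have p1: "(c / real (mm n)) powr (real v / real (card EH)) \<le> 1"
        by (rule powr_le1) (use cm c mpos in auto)
      show ?case using expect_formula[OF p0 p1, of "mm n" j] unfolding S_def a_def by simp
    qed
  qed
  have "(\<lambda>n. S (mm n) / (a ^ j * fact j)) \<longlonglongrightarrow> c ^ (v * j) / (a ^ j * fact j)"
    by (intro tendsto_divide Slim tendsto_const) (use a in simp)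
  moreover have "c ^ (v * j) / (a ^ j * fact j) = (c ^ v / a) ^ j / fact j"
    by (simp add: power_mult power_divide)
  ultimately show ?thesis using tendsto_cong[OF ev] unfolding a_def by simp
qed

end

theorem mainTheorem4:
  fixes vH :: nat and EH :: "nat set set" and c h0 :: real and m :: "nat \<Rightarrow> nat"
  assumes H_graph: "is_graph vH EH"
    and H_edge: "EH \<noteq> {}"
    and H_sb: "strictly_balanced vH EH"
    and c_pos: "c > 0" and h0_pos: "h0 > 0"
    and mu_ge: "c ^ vH / real (card (Aut vH EH)) \<ge> h0"
    and m_lim: "filterlim m at_top sequentially"
  shows "\<forall>\<epsilon>>0. (\<lambda>n. measure_pmf.prob
            (Pi_pmf {..<n} {} (\<lambda>_. gnp (m n) ((c / real (m n)) powr (1 / max_density vH EH))))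
            {\<omega>. let F = (\<lambda>l. \<Sum>i<n. (copies vH EH (m n) (\<omega> i) - h0)
                                  * exp (- l * (copies vH EH (m n) (\<omega> i) - h0)))
                in (\<exists>!l. F l = 0) \<and>
                   \<bar>(THE l. F l = 0) - ln ((c ^ vH / real (card (Aut vH EH))) / h0)\<bar> < \<epsilon>})
          \<longlonglongrightarrow> 1"
proof -
  interpret sbg vH EH by unfold_locales (fact H_graph H_edge H_sb)+
  define Q where "Q = (\<lambda>n. gnp (m n) ((c / real (m n)) powr (real vH / real (card EH))))"
  define \<psi> where "\<psi> = (\<lambda>n G. card (copyset (m n) G))"
  define \<mu> where "\<mu> = c ^ vH / real (card (Aut vH EH))"
  have \<mu>pos: "\<mu> > 0" unfolding \<mu>_def using c_pos Aut_pos by simp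
  have md: "1 / max_density vH EH = real vH / real (card EH)"
    using max_density_eq by simp
  have conv: "(\<lambda>n. measure_pmf.prob (Q n) {x. \<psi> n x = k}) \<longlonglongrightarrow> poi \<mu> k" for k
  proof (rule moments_to_poisson)
    show "finite (set_pmf (Q n))" for n unfolding Q_def by (rule gnp_finite)
    show "(\<lambda>n. measure_pmf.expectation (Q n) (\<lambda>x. real (\<psi> n x choose j))) \<longlonglongrightarrow> \<mu> ^ j / fact j" for j
      unfolding Q_def \<psi>_def \<mu>_def by (rule moments_lim[OF c_pos m_lim])
  qed
  have main: "\<forall>\<epsilon>>0. (\<lambda>n. measure_pmf.prob (Pi_pmf {..<n} {} (\<lambda>_. Q n))
            {\<omega>. let F = (\<lambda>l. \<Sum>i<n. (real (\<psi> n (\<omega> i)) - h0) * exp (- l * (real (\<psi> n (\<omega> i)) - h0)))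
                in (\<exists>!l. F l = 0) \<and> \<bar>(THE l. F l = 0) - ln (\<mu> / h0)\<bar> < \<epsilon>}) \<longlonglongrightarrow> 1"
    by (rule abstract_main[OF h0_pos _ conv]) (use mu_ge in \<open>simp add: \<mu>_def\<close>)
  show ?thesis
    using main unfolding md copies_eq Q_def \<psi>_def \<mu>_def .
qed


end
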